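(* Let $K$ be a Cantor set, let $T:K\to K$ be an endomorphism, and let $K_1,\dots,K_N$ be pairwise disjoint Cantor sets with $K=\bigcup_{i=1}^N K_i$. Then there exists an endomorphism $\widetilde T:K\to K$ such that for every $x\in K$ and every $1\le i\le N$, $\widetilde T(x)\in K_i$ if and only if $T(x)\in K_i$, and the orbit of every point of $K$ under $\widetilde T$ is finally periodic.
   Context: A Cantor set is a nonempty totally disconnected, perfect, compact metric space. An endomorphism of $K$ is a continuous surjection $K\to K$. The orbit of $x$ under a map $S$ is finally periodic if there exist integers $j,M>0$ with $S^{M+j}(x)=S^{j}(x)$. *)

theory Defs
  imports "HOL-Analysis.Analysis"
begin

definition cantor_set :: "'a::metric_space set \<Rightarrow> bool" where
  "cantor_set K \<longleftrightarrow> K \<noteq> {} \<and> compact K \<and> (\<forall>x\<in>K. x islimpt K)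
     \<and> (\<forall>C. C \<subseteq> K \<longrightarrow> connected C \<longrightarrow> (\<exists>a. C \<subseteq> {a}))"

definition endomorphism :: "'a::topological_space set \<Rightarrow> ('a \<Rightarrow> 'a) \<Rightarrow> bool" where
  "endomorphism K T \<longleftrightarrow> continuous_on K T \<and> T ` K = K"

definition finally_periodic :: "('a \<Rightarrow> 'a) \<Rightarrow> 'a \<Rightarrow> bool" where
  "finally_periodic S x \<longleftrightarrow> (\<exists>j M::nat. j > 0 \<and> M > 0 \<and> (S ^^ (M + j)) x = (S ^^ j) x)"

end

theory Submission
  imports Defs
begin


definition clopen_in :: "'a::metric_space set \<Rightarrow> 'a set \<Rightarrow> bool" where
  "clopen_in K S \<longleftrightarrow> S \<subseteq> K \<and> closed S \<and> closed (K - S)"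

lemma cantor_compact: "cantor_set K \<Longrightarrow> compact K"
  by (simp add: cantor_set_def)

lemma cantor_closed: "cantor_set K \<Longrightarrow> closed K"
  by (simp add: cantor_set_def compact_imp_closed)

lemma cantor_ne: "cantor_set K \<Longrightarrow> K \<noteq> {}"
  by (simp add: cantor_set_def)

lemma clopen_in_nbhd:
  assumes "clopen_in K S" "x \<in> S"
  shows "\<exists>d>0. \<forall>y\<in>K. dist y x < d \<longrightarrow> y \<in> S"
proof -
  have "closed (K - S)" using assms by (simp add: clopen_in_def)
  then have "open (- (K - S))" by (rule open_Compl)
  moreover have "x \<in> - (K - S)" using assms by auto
  ultimately obtain d where "d > 0" "ball x d \<subseteq> - (K - S)"
    using open_contains_ball by blast
  then show ?thesis by (auto simp: dist_commute subset_iff)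
qed

lemma perfect_clopen:
  assumes "\<forall>x\<in>K. x islimpt K" "clopen_in K S" "x \<in> S"
  shows "x islimpt S"
proof (rule islimptI)
  fix T assume "x \<in> T" "open T"
  have "closed (K - S)" using assms by (simp add: clopen_in_def)
  then have "open (- (K - S))" by (rule open_Compl)
  then have o: "open (T \<inter> - (K - S))" using \<open>open T\<close> by (rule open_Int[rotated])
  have "x \<in> T \<inter> - (K - S)" using assms \<open>x\<in>T\<close> by auto
  moreover have "x islimpt K" using assms clopen_in_def by auto
  ultimately obtain y where "y \<in> K" "y \<in> T \<inter> - (K - S)" "y \<noteq> x"
    using o islimptE by metis
  then show "\<exists>y\<in>S. y \<in> T \<and> y \<noteq> x" by auto
qed

lemma cantor_clopen:
  assumes "cantor_set K" "clopen_in K S" "S \<noteq> {}"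
  shows "cantor_set S"
proof -
  have "compact S"
    using assms compact_Int_closed[of K S] by (auto simp: cantor_set_def clopen_in_def Int_absorb1)
  moreover have "\<forall>x\<in>S. x islimpt S"
    using assms perfect_clopen by (auto simp: cantor_set_def)
  moreover have "\<forall>C. C \<subseteq> S \<longrightarrow> connected C \<longrightarrow> (\<exists>a. C \<subseteq> {a})"
    using assms by (auto simp: cantor_set_def clopen_in_def)
  ultimately show ?thesis using assms by (simp add: cantor_set_def)
qed

lemma clopen_in_trans:
  assumes "clopen_in K S" "clopen_in S U"
  shows "clopen_in K U"
proof -
  have "K - U = (K - S) \<union> (S - U)" using assms by (auto simp: clopen_in_def)
  then show ?thesis using assms by (auto simp: clopen_in_def)
qed

lemma clopen_in_Int:
  "clopen_in K S \<Longrightarrow> clopen_in K U \<Longrightarrow> clopen_in K (S \<inter> U)"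
  unfolding clopen_in_def by (auto simp: Diff_Int)

lemma clopen_in_Un:
  "clopen_in K S \<Longrightarrow> clopen_in K U \<Longrightarrow> clopen_in K (S \<union> U)"
  unfolding clopen_in_def by (auto simp: Diff_Un)

lemma clopen_in_Diff:
  "clopen_in K S \<Longrightarrow> clopen_in K U \<Longrightarrow> clopen_in K (S - U)"
proof -
  assume a: "clopen_in K S" "clopen_in K U"
  have "K - (S - U) = (K - S) \<union> U" using a by (auto simp: clopen_in_def)
  moreover have "S - U = S \<inter> (K - U)" using a by (auto simp: clopen_in_def)
  ultimately show ?thesis using a by (auto simp: clopen_in_def)
qed

lemma clopen_in_UN:
  assumes "finite I" "\<And>i. i \<in> I \<Longrightarrow> clopen_in K (F i)" "closed K"
  shows "clopen_in K (\<Union>i\<in>I. F i)"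
  using assms
proof (induction I rule: finite_induct)
  case empty then show ?case by (simp add: clopen_in_def)
next
  case (insert x F) then show ?case by (simp add: clopen_in_Un)
qed

lemma clopen_in_self: "closed K \<Longrightarrow> clopen_in K K"
  by (simp add: clopen_in_def)

lemma clopen_in_empty: "closed K \<Longrightarrow> clopen_in K {}"
  by (simp add: clopen_in_def)

lemma cantor_separate:
  assumes C: "cantor_set C" and xy: "x \<in> C" "y \<in> C" "x \<noteq> y"
  shows "\<exists>U. clopen_in C U \<and> x \<in> U \<and> y \<notin> U"
proof -
  let ?X = "top_of_set C"
  have "compact_space ?X"
    using C unfolding cantor_set_def by (simp add: compact_space_subtopology)
  moreover have "Hausdorff_space ?X"
    by (simp add: Hausdorff_space_subtopology)
  ultimately have "quasi_components_of ?X = connected_components_of ?X"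
    using quasi_eq_connected_components_of by blast
  then have eq: "quasi_component_of ?X x = connected_component_of ?X x"
    by (rule quasi_eq_connected_components_of_pointwise_alt[THEN iffD1, rule_format])
  have "\<not> connected_component_of ?X x y"
  proof
    assume "connected_component_of ?X x y"
    then obtain T where "connectedin ?X T" "x \<in> T" "y \<in> T"
      unfolding connected_component_of_def by blast
    then have "T \<subseteq> C" "connected T"
      by (auto simp: connectedin_subtopology)
    then obtain a where "T \<subseteq> {a}" using C unfolding cantor_set_def by blast
    then show False using \<open>x \<in> T\<close> \<open>y \<in> T\<close> xy by auto
  qed
  then have "\<not> quasi_component_of ?X x y" using eq by simp
  then obtain T where T: "x \<in> T" "closedin ?X T" "openin ?X T" "y \<notin> T"
    using xy by (metis quasi_component_of topspace_euclidean_subtopology)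
  have clC: "closed C" using C cantor_closed by blast
  have "closed T" using T(2) clC closedin_closed_trans by blast
  moreover have "closedin ?X (C - T)"
    using T(3) by (metis closedin_diff closedin_topspace topspace_euclidean_subtopology)
  then have "closed (C - T)" using clC closedin_closed_trans by blast
  moreover have "T \<subseteq> C" using T(2) closedin_subset by force
  ultimately show ?thesis using T by (auto simp: clopen_in_def)
qed

lemma cantor_other_point:
  assumes "cantor_set C" "x \<in> C"
  shows "\<exists>y\<in>C. y \<noteq> x"
proof -
  have "x islimpt C" using assms by (auto simp: cantor_set_def)
  then show ?thesis using islimptE[of x C UNIV] by auto
qed

lemma cantor_small_nbhd:
  assumes C: "cantor_set C" and a: "a \<in> C" and e: "e > 0"
  shows "\<exists>U. clopen_in C U \<and> a \<in> U \<and> U \<subseteq> ball a e"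
proof -
  define D where "D = C - ball a e"
  have "compact D" unfolding D_def using C
    by (metis Diff_eq cantor_compact compact_Int_closed open_ball closed_Compl)
  have "\<forall>y\<in>D. \<exists>U. clopen_in C U \<and> a \<in> U \<and> y \<notin> U"
  proof
    fix y assume "y \<in> D"
    then have "y \<in> C" "y \<noteq> a" using e by (auto simp: D_def)
    then show "\<exists>U. clopen_in C U \<and> a \<in> U \<and> y \<notin> U"
      using cantor_separate[OF C a] by metis
  qed
  then obtain G where G: "\<And>y. y \<in> D \<Longrightarrow> clopen_in C (G y) \<and> a \<in> G y \<and> y \<notin> G y"
    by metis
  have "D \<subseteq> (\<Union>y\<in>D. - G y)" using G by auto
  moreover have "\<And>y. y \<in> D \<Longrightarrow> open (- G y)" using G by (auto simp: clopen_in_def)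
  ultimately obtain F where F: "F \<subseteq> D" "finite F" "D \<subseteq> (\<Union>y\<in>F. - G y)"
    using compactE_image[OF \<open>compact D\<close>, of D "\<lambda>y. - G y"] by blast
  define U where "U = C \<inter> (\<Inter>y\<in>F. G y)"
  have clC: "closed C" using C cantor_closed by blast
  have "clopen_in C U"
  proof (cases "F = {}")
    case True then show ?thesis using clC by (simp add: clopen_in_def U_def)
  next
    case False
    have "C - U = (\<Union>y\<in>F. C - G y)" using False by (auto simp: U_def)
    moreover have "closed (\<Union>y\<in>F. C - G y)" using F G by (intro closed_UN) (auto simp: clopen_in_def)
    moreover have "closed U" unfolding U_def using F G clC by (intro closed_Int closed_INT) (auto simp: clopen_in_def)
    ultimately show ?thesis by (auto simp: clopen_in_def U_def)
  qed
  moreover have "a \<in> U" using G F a by (auto simp: U_def)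
  moreover have "U \<subseteq> ball a e"
  proof
    fix z assume "z \<in> U"
    show "z \<in> ball a e"
    proof (rule ccontr)
      assume "z \<notin> ball a e"
      then have "z \<in> D" using \<open>z\<in>U\<close> by (auto simp: U_def D_def)
      then obtain y where "y \<in> F" "z \<notin> G y" using F by auto
      then show False using \<open>z\<in>U\<close> by (auto simp: U_def)
    qed
  qed
  ultimately show ?thesis by blast
qed

lemma compact_decreasing_nest:
  assumes "compact U" "\<And>n. closed (S n)" "\<And>n. S n \<noteq> {}" "\<And>n. S n \<subseteq> U"
    "\<And>n. S (Suc n) \<subseteq> S n"
  shows "\<exists>x. \<forall>n. x \<in> S n"
proof -
  have mono: "S n \<subseteq> S m" if "m \<le> n" for m n
    using that
  proof (induction n)
    case (Suc n) then show ?case using assms(5)[of n] by (auto simp: le_Suc_eq)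
  qed auto
  have fip: "\<forall>A. (\<forall>a\<in>A. closed a) \<longrightarrow> (\<forall>B \<subseteq> A. finite B \<longrightarrow> U \<inter> \<Inter>B \<noteq> {}) \<longrightarrow> U \<inter> \<Inter>A \<noteq> {}"
    using compact_fip[of U] assms(1) by simp
  have "\<forall>B \<subseteq> range S. finite B \<longrightarrow> U \<inter> \<Inter>B \<noteq> {}"
  proof (intro allI impI)
    fix B assume B: "B \<subseteq> range S" "finite B"
    then obtain I where I: "finite I" "B = S ` I" by (meson finite_subset_image)
    define m where "m = Max (insert 0 I)"
    have "\<forall>i\<in>I. i \<le> m" using I by (simp add: m_def)
    then have "S m \<subseteq> \<Inter>B" using I mono by auto
    then show "U \<inter> \<Inter>B \<noteq> {}" using assms(3,4)[of m] by blast
  qed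
  moreover have "\<forall>a\<in>range S. closed a" using assms by auto
  ultimately have "U \<inter> \<Inter>(range S) \<noteq> {}" using fip by blast
  then show ?thesis by auto
qed


lemma cantor_split:
  assumes C: "cantor_set C" and k: "k \<ge> 1"
  shows "\<exists>P::nat \<Rightarrow> 'a::metric_space set. (\<forall>m<k. clopen_in C (P m) \<and> P m \<noteq> {})
      \<and> (\<forall>m<k. \<forall>m'<k. m \<noteq> m' \<longrightarrow> P m \<inter> P m' = {}) \<and> (\<Union>m<k. P m) = C"
  using k
proof (induction k rule: dec_induct)
  case base
  show ?case using C cantor_closed[OF C] cantor_ne[OF C]
    by (intro exI[of _ "\<lambda>_. C"]) (auto simp: clopen_in_self)
next
  case (step k)
  then obtain P where P: "\<forall>m<k. clopen_in C (P m) \<and> P m \<noteq> {}"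
      "\<forall>m<k. \<forall>m'<k. m \<noteq> m' \<longrightarrow> P m \<inter> P m' = {}" "(\<Union>m<k. P m) = C" by blast
  let ?Q = "P (k - 1)"
  have kk: "k - 1 < k" using step by auto
  have cQ: "cantor_set ?Q" using P kk cantor_clopen[OF C] by blast
  obtain x where "x \<in> ?Q" using P kk by blast
  then obtain y where "y \<in> ?Q" "y \<noteq> x" using cantor_other_point[OF cQ] by blast
  then obtain U where U: "clopen_in ?Q U" "x \<in> U" "y \<notin> U"
    using cantor_separate[OF cQ \<open>x \<in> ?Q\<close>] by metis
  have UC: "clopen_in C U" using clopen_in_trans P kk U by blast
  have VQ: "clopen_in ?Q (?Q - U)" using U cQ cantor_closed clopen_in_Diff clopen_in_self by blast
  have VC: "clopen_in C (?Q - U)" using clopen_in_trans P kk VQ by blast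
  define P' where "P' = (\<lambda>m. if m < k - 1 then P m else if m = k - 1 then U else ?Q - U)"
  have "U \<subseteq> ?Q" using U by (simp add: clopen_in_def)
  have "\<forall>m<Suc k. clopen_in C (P' m) \<and> P' m \<noteq> {}"
    using P UC VC U \<open>y \<in> ?Q\<close> by (auto simp: P'_def less_Suc_eq)
  moreover have "\<forall>m<Suc k. \<forall>m'<Suc k. m \<noteq> m' \<longrightarrow> P' m \<inter> P' m' = {}"
  proof (intro allI impI)
    fix m m' assume mm: "m < Suc k" "m' < Suc k" "m \<noteq> m'"
    have d: "\<And>m. m < k - 1 \<Longrightarrow> P m \<inter> ?Q = {}" using P kk by auto
    have sub: "\<And>m. \<not> m < k - 1 \<Longrightarrow> P' m \<subseteq> ?Q" using \<open>U \<subseteq> ?Q\<close> by (auto simp: P'_def)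
    show "P' m \<inter> P' m' = {}"
    proof (cases "m < k - 1")
      case True
      show ?thesis
      proof (cases "m' < k - 1")
        case True
        then show ?thesis using \<open>m < k - 1\<close> P mm by (auto simp: P'_def)
      next
        case False
        then show ?thesis using sub[OF False] d[OF \<open>m < k - 1\<close>] \<open>m < k - 1\<close> by (auto simp: P'_def)
      qed
    next
      case False
      show ?thesis
      proof (cases "m' < k - 1")
        case True
        then show ?thesis using sub[OF \<open>\<not> m < k - 1\<close>] d[OF True] by (auto simp: P'_def)
      next
        case False
        then have "{m, m'} = {k - 1, k}" using \<open>\<not> m < k - 1\<close> mm by auto
        then show ?thesis using mm by (auto simp: P'_def doubleton_eq_iff)
      qed
    qed
  qed
  moreover have "(\<Union>m<Suc k. P' m) = C"
  proof -
    have "(\<Union>m<Suc k. P' m) = (\<Union>m<k - 1. P m) \<union> U \<union> (?Q - U)"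
    proof -
      have e1: "{..<Suc k} = {..<k - 1} \<union> {k - 1, k}" using step by auto
      have "(\<Union>m<Suc k. P' m) = (\<Union>m\<in>{..<k - 1}. P' m) \<union> P' (k - 1) \<union> P' k"
        unfolding e1 by auto
      moreover have "(\<Union>m\<in>{..<k - 1}. P' m) = (\<Union>m<k - 1. P m)" by (auto simp: P'_def)
      moreover have "P' (k - 1) = U" "P' k = ?Q - U" using step by (auto simp: P'_def)
      ultimately show ?thesis by simp
    qed
    also have "\<dots> = (\<Union>m<k - 1. P m) \<union> ?Q" using \<open>U \<subseteq> ?Q\<close> by auto
    also have "\<dots> = (\<Union>m<k. P m)"
    proof -
      have e2: "{..<k} = {..<k - 1} \<union> {k - 1}" using step by auto
      show ?thesis unfolding e2 by auto
    qed
    finally show ?thesis using P by simp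
  qed
  ultimately show ?case by blast
qed


lemma clopen_in_open_compl: "clopen_in K S \<Longrightarrow> open (- (K - S))"
  unfolding clopen_in_def by (intro open_Compl) auto

definition small :: "real \<Rightarrow> 'a::metric_space set \<Rightarrow> bool" where
  "small e S \<longleftrightarrow> (\<forall>x\<in>S. \<forall>y\<in>S. dist x y < e)"

lemma cantor_small_partition_set:
  assumes V: "cantor_set V" and e: "e > 0"
  shows "\<exists>P. finite P \<and> (\<forall>S\<in>P. clopen_in V S \<and> S \<noteq> {} \<and> small e S)
     \<and> (\<forall>S\<in>P. \<forall>S'\<in>P. S \<noteq> S' \<longrightarrow> S \<inter> S' = {}) \<and> \<Union>P = V"
proof -
  have "\<forall>a\<in>V. \<exists>U. clopen_in V U \<and> a \<in> U \<and> U \<subseteq> ball a (e/2)"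
    using cantor_small_nbhd[OF V] e by auto
  then obtain G where G: "\<And>a. a \<in> V \<Longrightarrow> clopen_in V (G a) \<and> a \<in> G a \<and> G a \<subseteq> ball a (e/2)"
    by metis
  have "V \<subseteq> (\<Union>a\<in>V. - (V - G a))" using G by auto
  moreover have "\<And>a. a \<in> V \<Longrightarrow> open (- (V - G a))" using G clopen_in_open_compl by blast
  ultimately obtain F where F: "F \<subseteq> V" "finite F" "V \<subseteq> (\<Union>a\<in>F. - (V - G a))"
    using compactE_image[OF cantor_compact[OF V], of V "\<lambda>a. - (V - G a)"] by blast
  have clV: "closed V" using V cantor_closed by blast
  define atom where "atom z = {w \<in> V. \<forall>a\<in>F. w \<in> G a \<longleftrightarrow> z \<in> G a}" for z
  define P where "P = atom ` V"
  have "P \<subseteq> (\<lambda>A. {w \<in> V. \<forall>a\<in>F. w \<in> G a \<longleftrightarrow> a \<in> A}) ` Pow F"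
  proof
    fix S assume "S \<in> P"
    then obtain z where z: "z \<in> V" "S = atom z" by (auto simp: P_def)
    have "S = {w \<in> V. \<forall>a\<in>F. w \<in> G a \<longleftrightarrow> a \<in> {a\<in>F. z \<in> G a}}"
      using z by (auto simp: atom_def)
    then show "S \<in> (\<lambda>A. {w \<in> V. \<forall>a\<in>F. w \<in> G a \<longleftrightarrow> a \<in> A}) ` Pow F" by blast
  qed
  then have finP: "finite P" using F(2) by (meson finite_Pow_iff finite_imageI finite_subset)
  have clo: "clopen_in V (atom z)" if "z \<in> V" for z
  proof -
    have "atom z = V \<inter> (\<Inter>a\<in>F. if z \<in> G a then G a else V - G a)"
      by (auto simp: atom_def split: if_splits)
    moreover have "closed (V \<inter> (\<Inter>a\<in>F. if z \<in> G a then G a else V - G a))"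
      using G F clV by (intro closed_Int closed_INT) (auto simp: clopen_in_def)
    moreover have "V - atom z = (\<Union>a\<in>F. if z \<in> G a then V - G a else G a)"
      using G F by (auto simp: atom_def clopen_in_def split: if_splits)
    moreover have "closed (\<Union>a\<in>F. if z \<in> G a then V - G a else G a)"
      using G F by (intro closed_UN) (auto simp: clopen_in_def)
    ultimately show ?thesis by (auto simp: clopen_in_def atom_def)
  qed
  have sm: "small e (atom z)" if "z \<in> V" for z
  proof -
    have "z \<in> (\<Union>a\<in>F. - (V - G a))" using F(3) that by blast
    then obtain a where a: "a \<in> F" "z \<in> - (V - G a)" by blast
    then have a: "a \<in> F" "z \<in> G a" using that by auto
    then have "atom z \<subseteq> G a" by (auto simp: atom_def)
    moreover have "G a \<subseteq> ball a (e/2)" using G F a by auto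
    ultimately have "atom z \<subseteq> ball a (e/2)" by blast
    show ?thesis unfolding small_def
    proof (intro ballI)
      fix x y assume "x \<in> atom z" "y \<in> atom z"
      then have "dist a x < e/2" "dist a y < e/2" using \<open>atom z \<subseteq> ball a (e/2)\<close> by auto
      moreover have "dist x y \<le> dist x a + dist y a" by (rule dist_triangle2)
      ultimately show "dist x y < e" by (simp add: dist_commute)
    qed
  qed
  have zin: "z \<in> atom z" if "z \<in> V" for z using that by (auto simp: atom_def)
  have dis: "atom z \<inter> atom z' = {}" if "atom z \<noteq> atom z'" for z z'
  proof (rule ccontr)
    assume "atom z \<inter> atom z' \<noteq> {}"
    then obtain w where "w \<in> atom z" "w \<in> atom z'" by blast
    then have "\<forall>a\<in>F. z \<in> G a \<longleftrightarrow> z' \<in> G a" by (auto simp: atom_def)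
    then have "atom z = atom z'" unfolding atom_def by blast
    then show False using that by simp
  qed
  have un: "\<Union>P = V" using \<open>\<And>z. z \<in> V \<Longrightarrow> z \<in> atom z\<close> by (auto simp: P_def atom_def)
  have "\<forall>S\<in>P. clopen_in V S \<and> S \<noteq> {} \<and> small e S"
    using clo sm zin by (auto simp: P_def)
  moreover have "\<forall>S\<in>P. \<forall>S'\<in>P. S \<noteq> S' \<longrightarrow> S \<inter> S' = {}"
    using dis by (auto simp: P_def)
  ultimately show ?thesis using finP un by blast
qed

lemma cantor_small_partition:
  assumes V: "cantor_set V" and e: "e > 0"
  shows "\<exists>(k::nat) (P::nat \<Rightarrow> 'a::metric_space set). (\<forall>m<k. clopen_in V (P m) \<and> P m \<noteq> {} \<and> small e (P m))
     \<and> (\<forall>m<k. \<forall>m'<k. m \<noteq> m' \<longrightarrow> P m \<inter> P m' = {}) \<and> (\<Union>m<k. P m) = V"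
proof -
  obtain PS where PS: "finite PS" "\<forall>S\<in>PS. clopen_in V S \<and> S \<noteq> {} \<and> small e S"
     "\<forall>S\<in>PS. \<forall>S'\<in>PS. S \<noteq> S' \<longrightarrow> S \<inter> S' = {}" "\<Union>PS = V"
    using cantor_small_partition_set[OF V e] by blast
  obtain h where h: "bij_betw h {0..<card PS} PS" using ex_bij_betw_nat_finite[OF PS(1)] by blast
  have hin: "\<And>m. m < card PS \<Longrightarrow> h m \<in> PS" using h by (auto simp: bij_betw_def)
  have "\<forall>m<card PS. \<forall>m'<card PS. m \<noteq> m' \<longrightarrow> h m \<inter> h m' = {}"
  proof (intro allI impI)
    fix m m' assume "m < card PS" "m' < card PS" "m \<noteq> m'"
    then have "h m \<noteq> h m'" using h by (auto simp: bij_betw_def inj_on_def)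
    then show "h m \<inter> h m' = {}" using PS(3) hin \<open>m < card PS\<close> \<open>m' < card PS\<close> by blast
  qed
  moreover have "(\<Union>m<card PS. h m) = V"
  proof -
    have "h ` {..<card PS} = PS" using h by (simp add: bij_betw_def lessThan_atLeast0)
    then show ?thesis using PS(4) by auto
  qed
  moreover have "\<forall>m<card PS. clopen_in V (h m) \<and> h m \<noteq> {} \<and> small e (h m)"
    using PS(2) hin by blast
  ultimately show ?thesis
    apply -
    apply (rule exI[where x="card PS"])
    apply (rule exI[where x=h])
    apply simp
    done
qed


definition good :: "'a::metric_space set \<Rightarrow> 'a set \<Rightarrow> ('a set \<times> 'a set) set \<Rightarrow> bool" where
  "good X Y Q \<longleftrightarrow> finite Q
    \<and> (\<forall>(U,V)\<in>Q. clopen_in X U \<and> U \<noteq> {} \<and> clopen_in Y V \<and> V \<noteq> {})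
    \<and> (\<forall>q\<in>Q. \<forall>q'\<in>Q. q \<noteq> q' \<longrightarrow> fst q \<inter> fst q' = {})
    \<and> (\<forall>q\<in>Q. \<forall>q'\<in>Q. snd q = snd q' \<or> snd q \<inter> snd q' = {})
    \<and> \<Union>(fst ` Q) = X \<and> \<Union>(snd ` Q) = Y"

lemma good_step:
  fixes X Y :: "'a::metric_space set"
  assumes X: "cantor_set X" and Y: "cantor_set Y" and Q: "good X Y Q" and e: "e > 0"
  shows "\<exists>Q'. good X Y Q' \<and> (\<forall>q'\<in>Q'. \<exists>q\<in>Q. fst q' \<subseteq> fst q \<and> snd q' \<subseteq> snd q)
     \<and> (\<forall>q'\<in>Q'. small e (snd q'))"
proof -
  have cV: "cantor_set V" if "V \<in> snd ` Q" for V
    using that Q Y cantor_clopen by (fastforce simp: good_def)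
  have cU: "cantor_set U" if "U \<in> fst ` Q" for U
    using that Q X cantor_clopen by (fastforce simp: good_def)
  have "\<forall>V\<in>snd ` Q. \<exists>(k::nat) (P::nat \<Rightarrow> 'a set). (\<forall>m<k. clopen_in V (P m) \<and> P m \<noteq> {} \<and> small e (P m))
     \<and> (\<forall>m<k. \<forall>m'<k. m \<noteq> m' \<longrightarrow> P m \<inter> P m' = {}) \<and> (\<Union>m<k. P m) = V"
    using cantor_small_partition[OF cV e] by blast
  then obtain kV :: "'a set \<Rightarrow> nat" and PV :: "'a set \<Rightarrow> nat \<Rightarrow> 'a set" where PV: "\<And>V. V \<in> snd ` Q \<Longrightarrow>
      (\<forall>m<kV V. clopen_in V (PV V m) \<and> PV V m \<noteq> {} \<and> small e (PV V m))
     \<and> (\<forall>m<kV V. \<forall>m'<kV V. m \<noteq> m' \<longrightarrow> PV V m \<inter> PV V m' = {}) \<and> (\<Union>m<kV V. PV V m) = V"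
    by metis
  have kpos: "kV V \<ge> 1" if "V \<in> snd ` Q" for V
  proof (rule ccontr)
    assume "\<not> kV V \<ge> 1"
    then have "kV V = 0" by simp
    then have "V = {}" using PV[OF that] by simp
    then show False using that Q by (auto simp: good_def)
  qed
  have "\<forall>q\<in>Q. \<exists>P::nat \<Rightarrow> 'a set. (\<forall>m<kV (snd q). clopen_in (fst q) (P m) \<and> P m \<noteq> {})
      \<and> (\<forall>m<kV (snd q). \<forall>m'<kV (snd q). m \<noteq> m' \<longrightarrow> P m \<inter> P m' = {}) \<and> (\<Union>m<kV (snd q). P m) = fst q"
  proof
    fix q assume q: "q \<in> Q"
    have "cantor_set (fst q)" using cU q by blast
    moreover have "kV (snd q) \<ge> 1" using kpos q by blast
    ultimately show "\<exists>P::nat \<Rightarrow> 'a set. (\<forall>m<kV (snd q). clopen_in (fst q) (P m) \<and> P m \<noteq> {})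
      \<and> (\<forall>m<kV (snd q). \<forall>m'<kV (snd q). m \<noteq> m' \<longrightarrow> P m \<inter> P m' = {}) \<and> (\<Union>m<kV (snd q). P m) = fst q"
      by (rule cantor_split)
  qed
  then obtain SU :: "'a set \<times> 'a set \<Rightarrow> nat \<Rightarrow> 'a set" where SU: "\<And>q. q \<in> Q \<Longrightarrow> (\<forall>m<kV (snd q). clopen_in (fst q) (SU q m) \<and> SU q m \<noteq> {})
      \<and> (\<forall>m<kV (snd q). \<forall>m'<kV (snd q). m \<noteq> m' \<longrightarrow> SU q m \<inter> SU q m' = {}) \<and> (\<Union>m<kV (snd q). SU q m) = fst q"
    by metis
  define R where "R q = (\<lambda>m. (SU q m, PV (snd q) m)) ` {..<kV (snd q)}" for q
  define Q' where "Q' = (\<Union>q\<in>Q. R q)"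
  have finQ: "finite Q" using Q by (simp add: good_def)
  have Qcl: "\<And>q. q \<in> Q \<Longrightarrow> clopen_in X (fst q) \<and> fst q \<noteq> {} \<and> clopen_in Y (snd q) \<and> snd q \<noteq> {}"
    using Q by (auto simp: good_def)
  have Qd1: "\<And>q q'. q \<in> Q \<Longrightarrow> q' \<in> Q \<Longrightarrow> q \<noteq> q' \<Longrightarrow> fst q \<inter> fst q' = {}"
    using Q by (auto simp: good_def)
  have Qd2: "\<And>q q'. q \<in> Q \<Longrightarrow> q' \<in> Q \<Longrightarrow> snd q = snd q' \<or> snd q \<inter> snd q' = {}"
    using Q by (auto simp: good_def)
  have mem: "q' \<in> Q' \<longleftrightarrow> (\<exists>q\<in>Q. \<exists>m<kV (snd q). q' = (SU q m, PV (snd q) m))" for q'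
    by (auto simp: Q'_def R_def)
  have "finite Q'" using finQ by (auto simp: Q'_def R_def)
  moreover have "\<forall>(U,V)\<in>Q'. clopen_in X U \<and> U \<noteq> {} \<and> clopen_in Y V \<and> V \<noteq> {}"
  proof (rule ballI)
    fix p assume "p \<in> Q'"
    then obtain q m where q: "q \<in> Q" "m < kV (snd q)" and p: "p = (SU q m, PV (snd q) m)" using mem by blast
    have "snd q \<in> snd ` Q" using q by auto
    then have b: "clopen_in (snd q) (PV (snd q) m)" "PV (snd q) m \<noteq> {}" using PV q(2) by auto
    have a: "clopen_in (fst q) (SU q m)" "SU q m \<noteq> {}" using SU[OF q(1)] q(2) by auto
    have "clopen_in X (fst q)" "clopen_in Y (snd q)" using Qcl[OF q(1)] by auto
    then have "clopen_in X (SU q m) \<and> SU q m \<noteq> {} \<and> clopen_in Y (PV (snd q) m) \<and> PV (snd q) m \<noteq> {}"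
      using a b clopen_in_trans by blast
    then show "case p of (U,V) \<Rightarrow> clopen_in X U \<and> U \<noteq> {} \<and> clopen_in Y V \<and> V \<noteq> {}" using p by simp
  qed
  moreover have "\<forall>q1\<in>Q'. \<forall>q2\<in>Q'. q1 \<noteq> q2 \<longrightarrow> fst q1 \<inter> fst q2 = {}"
  proof (intro ballI impI)
    fix p1 p2 assume "p1 \<in> Q'" "p2 \<in> Q'" "p1 \<noteq> p2"
    then obtain q m q' m' where q: "q \<in> Q" "m < kV (snd q)" "q' \<in> Q" "m' < kV (snd q')"
      and p: "p1 = (SU q m, PV (snd q) m)" "p2 = (SU q' m', PV (snd q') m')" using mem by metis
    have ne: "SU q m = SU q' m' \<longrightarrow> PV (snd q) m \<noteq> PV (snd q') m'" using p \<open>p1 \<noteq> p2\<close> by auto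
    have "SU q m \<inter> SU q' m' = {}"
    proof (cases "q = q'")
      case True
      then have "m \<noteq> m'" using ne by auto
      then show ?thesis using SU[OF q(1)] q True by auto
    next
      case False
      have "SU q m \<subseteq> fst q" using SU[OF q(1)] q(2) by blast
      moreover have "SU q' m' \<subseteq> fst q'" using SU[OF q(3)] q(4) by blast
      ultimately show ?thesis using Qd1[OF q(1) q(3) False] by blast
    qed
    then show "fst p1 \<inter> fst p2 = {}" using p by simp
  qed
  moreover have "\<forall>q1\<in>Q'. \<forall>q2\<in>Q'. snd q1 = snd q2 \<or> snd q1 \<inter> snd q2 = {}"
  proof (intro ballI)
    fix p1 p2 assume "p1 \<in> Q'" "p2 \<in> Q'"
    then obtain q m q' m' where q: "q \<in> Q" "m < kV (snd q)" "q' \<in> Q" "m' < kV (snd q')"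
      and p: "p1 = (SU q m, PV (snd q) m)" "p2 = (SU q' m', PV (snd q') m')" using mem by metis
    have i1: "snd q \<in> snd ` Q" "snd q' \<in> snd ` Q" using q by auto
    have "PV (snd q) m = PV (snd q') m' \<or> PV (snd q) m \<inter> PV (snd q') m' = {}"
    proof (cases "snd q = snd q'")
      case True
      then show ?thesis using PV[OF i1(1)] q by (cases "m = m'") auto
    next
      case False
      have "PV (snd q) m \<subseteq> snd q" "PV (snd q') m' \<subseteq> snd q'" using PV[OF i1(1)] PV[OF i1(2)] q by auto
      then show ?thesis using Qd2[OF q(1) q(3)] False by blast
    qed
    then show "snd p1 = snd p2 \<or> snd p1 \<inter> snd p2 = {}" using p by simp
  qed
  moreover have "\<Union>(fst ` Q') = X"
  proof -
    have "\<Union>(fst ` Q') = (\<Union>q\<in>Q. \<Union>m<kV (snd q). SU q m)" by (auto simp: Q'_def R_def)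
    also have "\<dots> = (\<Union>q\<in>Q. fst q)" using SU by auto
    also have "\<dots> = X" using Q by (simp add: good_def)
    finally show ?thesis .
  qed
  moreover have "\<Union>(snd ` Q') = Y"
  proof -
    have "\<Union>(snd ` Q') = (\<Union>q\<in>Q. \<Union>m<kV (snd q). PV (snd q) m)" by (auto simp: Q'_def R_def)
    also have "\<dots> = (\<Union>q\<in>Q. snd q)" using PV by auto
    also have "\<dots> = Y" using Q by (simp add: good_def)
    finally show ?thesis .
  qed
  ultimately have "good X Y Q'" unfolding good_def by blast
  moreover have "\<forall>q'\<in>Q'. \<exists>q\<in>Q. fst q' \<subseteq> fst q \<and> snd q' \<subseteq> snd q"
  proof (rule ballI)
    fix p assume "p \<in> Q'"
    then obtain q m where q: "q \<in> Q" "m < kV (snd q)" and p: "p = (SU q m, PV (snd q) m)" using mem by blast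
    have "snd q \<in> snd ` Q" using q by auto
    then have "SU q m \<subseteq> fst q \<and> PV (snd q) m \<subseteq> snd q"
      using SU[OF q(1)] PV[of "snd q"] q by (auto simp: clopen_in_def)
    then show "\<exists>q'\<in>Q. fst p \<subseteq> fst q' \<and> snd p \<subseteq> snd q'" using p q(1) by auto
  qed
  moreover have "\<forall>q'\<in>Q'. small e (snd q')"
  proof (rule ballI)
    fix p assume "p \<in> Q'"
    then obtain q m where q: "q \<in> Q" "m < kV (snd q)" and p: "p = (SU q m, PV (snd q) m)" using mem by blast
    have "snd q \<in> snd ` Q" using q by auto
    then show "small e (snd p)" using PV[of "snd q"] q p by auto
  qed
  ultimately show ?thesis
    apply -
    apply (rule exI[where x=Q'])
    apply (intro conjI)
      apply assumption+
    done
qed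


definition refines :: "('a set \<times> 'a set) set \<Rightarrow> ('a set \<times> 'a set) set \<Rightarrow> bool" where
  "refines Q' Q \<longleftrightarrow> (\<forall>q'\<in>Q'. \<exists>q\<in>Q. fst q' \<subseteq> fst q \<and> snd q' \<subseteq> snd q)"

lemma small_eq:
  fixes a b :: "'a::metric_space"
  assumes "\<And>n. dist a b < 1 / real (Suc n)"
  shows "a = b"
proof (rule ccontr)
  assume "a \<noteq> b"
  then have "dist a b > 0" by simp
  then obtain n where "n > 0" "inverse (real n) < dist a b" using ex_inverse_of_nat_less by blast
  moreover have "dist a b < 1 / real (Suc n)" by (rule assms)
  moreover have "1 / real (Suc n) \<le> inverse (real n)" using \<open>n > 0\<close> by (simp add: field_simps)
  ultimately show False by linarith
qed

lemma cantor_surj: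
  fixes X Y :: "'a::metric_space set"
  assumes X: "cantor_set X" and Y: "cantor_set Y"
  shows "\<exists>s. continuous_on X s \<and> s ` X = Y"
proof -
  have clX: "closed X" and clY: "closed Y" using X Y cantor_closed by auto
  have g0: "good X Y {(X,Y)}"
    using clX clY cantor_ne[OF X] cantor_ne[OF Y] by (auto simp: good_def clopen_in_self)
  define step where "step Q n = (SOME Q'. good X Y Q' \<and> refines Q' Q \<and> (\<forall>q'\<in>Q'. small (1 / real (Suc n)) (snd q')))" for Q n
  define Qs where "Qs n = rec_nat {(X,Y)} (\<lambda>n Q. step Q n) n" for n
  have Qs0: "Qs 0 = {(X,Y)}" by (simp add: Qs_def)
  have QsS: "Qs (Suc n) = step (Qs n) n" for n by (simp add: Qs_def)
  have stepok: "good X Y (step Q n) \<and> refines (step Q n) Q \<and> (\<forall>q'\<in>step Q n. small (1 / real (Suc n)) (snd q'))"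
    if "good X Y Q" for Q n
  proof -
    have "\<exists>Q'. good X Y Q' \<and> refines Q' Q \<and> (\<forall>q'\<in>Q'. small (1 / real (Suc n)) (snd q'))"
      using good_step[OF X Y that, of "1 / real (Suc n)"] by (simp add: refines_def)
    then show ?thesis unfolding step_def by (rule someI_ex)
  qed
  have good: "good X Y (Qs n)" for n
    by (induction n) (simp_all add: Qs0 g0 QsS stepok)
  have ref: "refines (Qs (Suc n)) (Qs n)" for n using stepok[OF good[of n]] QsS by simp
  have sm: "\<forall>q'\<in>Qs (Suc n). small (1 / real (Suc n)) (snd q')" for n using stepok[OF good[of n]] QsS by simp
  have ex1: "\<exists>!q. q \<in> Qs n \<and> x \<in> fst q" if "x \<in> X" for x n
  proof -
    have "x \<in> \<Union>(fst ` Qs n)" using good[of n] that by (simp add: good_def)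
    then obtain q where q: "q \<in> Qs n" "x \<in> fst q" by auto
    moreover have "q' = q" if "q' \<in> Qs n" "x \<in> fst q'" for q'
      using good[of n] q that unfolding good_def by blast
    ultimately show ?thesis by blast
  qed
  define pc where "pc n x = (THE q. q \<in> Qs n \<and> x \<in> fst q)" for n x
  have pc: "pc n x \<in> Qs n \<and> x \<in> fst (pc n x)" if "x \<in> X" for n x
    unfolding pc_def using theI'[OF ex1[OF that]] .
  have pcu: "q = pc n x" if "x \<in> X" "q \<in> Qs n" "x \<in> fst q" for q n x
    using ex1[OF that(1)] pc[OF that(1)] that by blast
  have Qcl: "clopen_in X (fst q) \<and> fst q \<noteq> {} \<and> clopen_in Y (snd q) \<and> snd q \<noteq> {}" if "q \<in> Qs n" for q n
    using good[of n] that by (auto simp: good_def)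
  have Qsub: "fst q \<subseteq> X \<and> closed (fst q) \<and> snd q \<subseteq> Y \<and> closed (snd q) \<and> fst q \<noteq> {}" if "q \<in> Qs n" for q n
    using Qcl[OF that] by (auto simp: clopen_in_def)
  have nest: "snd (pc (Suc n) x) \<subseteq> snd (pc n x)" if x: "x \<in> X" for n x
  proof -
    obtain q where q: "q \<in> Qs n" "fst (pc (Suc n) x) \<subseteq> fst q" "snd (pc (Suc n) x) \<subseteq> snd q"
      using ref[of n] pc[OF x, of "Suc n"] unfolding refines_def by blast
    have "x \<in> fst q" using q pc[OF x, of "Suc n"] by blast
    then have "q = pc n x" using pcu[OF x q(1)] by simp
    then show ?thesis using q by simp
  qed
  define s where "s x = (SOME y. \<forall>n. y \<in> snd (pc n x))" for x
  have smem: "s x \<in> snd (pc n x)" if x: "x \<in> X" for x n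
  proof -
    have Vn: "clopen_in Y (snd (pc n x)) \<and> snd (pc n x) \<noteq> {}" for n
      using Qcl[of "pc n x" n] pc[OF x] by blast
    have "\<exists>y. \<forall>n. y \<in> snd (pc n x)"
    proof (rule compact_decreasing_nest[OF cantor_compact[OF Y]])
      show "closed (snd (pc n x))" for n using Vn by (auto simp: clopen_in_def)
      show "snd (pc n x) \<noteq> {}" for n using Vn by auto
      show "snd (pc n x) \<subseteq> Y" for n using Vn by (auto simp: clopen_in_def)
      show "snd (pc (Suc n) x) \<subseteq> snd (pc n x)" for n using nest[OF x] .
    qed
    then have "\<forall>n. s x \<in> snd (pc n x)" unfolding s_def by (rule someI_ex)
    then show ?thesis by blast
  qed
  have cont: "continuous_on X s"
    unfolding continuous_on_iff
  proof (intro ballI allI impI)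
    fix x and e :: real assume x: "x \<in> X" and e: "e > 0"
    obtain n where "n > 0" "inverse (real n) < e" using ex_inverse_of_nat_less e by blast
    then have ne: "1 / real (Suc n) < e"
      by (smt (verit, ccfv_SIG) divide_less_eq_1 inverse_eq_divide inverse_less_iff_less of_nat_0_less_iff of_nat_less_iff lessI)
    have "clopen_in X (fst (pc (Suc n) x))" using Qcl pc[OF x] by blast
    then obtain d where d: "d > 0" "\<forall>y\<in>X. dist y x < d \<longrightarrow> y \<in> fst (pc (Suc n) x)"
      using clopen_in_nbhd pc[OF x] by blast
    show "\<exists>d>0. \<forall>x'\<in>X. dist x' x < d \<longrightarrow> dist (s x') (s x) < e"
    proof (intro exI[of _ d] conjI ballI impI)
      show "d > 0" by fact
      fix x' assume x': "x' \<in> X" "dist x' x < d"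
      then have "x' \<in> fst (pc (Suc n) x)" using d by blast
      then have "pc (Suc n) x = pc (Suc n) x'" using pcu[OF x'(1)] pc[OF x] by blast
      then have "s x' \<in> snd (pc (Suc n) x)" "s x \<in> snd (pc (Suc n) x)" using smem x x' by metis+
      then have "dist (s x') (s x) < 1 / real (Suc n)" using sm[of n] pc[OF x] unfolding small_def by blast
      then show "dist (s x') (s x) < e" using ne by linarith
    qed
  qed
  have "s ` X \<subseteq> Y"
  proof
    fix z assume "z \<in> s ` X"
    then obtain x where x: "x \<in> X" "z = s x" by blast
    have "snd (pc 0 x) \<subseteq> Y" using Qsub[of "pc 0 x" 0] pc[OF x(1)] by blast
    then show "z \<in> Y" using smem[OF x(1), of 0] x(2) by blast
  qed
  moreover have "Y \<subseteq> s ` X"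
  proof
    fix y assume y: "y \<in> Y"
    have exW: "\<exists>!V. V \<in> snd ` Qs n \<and> y \<in> V" for n
    proof -
      have "y \<in> \<Union>(snd ` Qs n)" using good[of n] y by (simp add: good_def)
      then obtain V where V: "V \<in> snd ` Qs n" "y \<in> V" by auto
      moreover have "V' = V" if "V' \<in> snd ` Qs n" "y \<in> V'" for V'
        using good[of n] V that unfolding good_def by blast
      ultimately show ?thesis by blast
    qed
    define W where "W n = (THE V. V \<in> snd ` Qs n \<and> y \<in> V)" for n
    have W: "W n \<in> snd ` Qs n \<and> y \<in> W n" for n unfolding W_def using theI'[OF exW] .
    have Wu: "V = W n" if "V \<in> snd ` Qs n" "y \<in> V" for V n
      using exW[of n] W[of n] that by (metis (no_types, lifting))
    define S where "S n = \<Union>(fst ` {q \<in> Qs n. snd q = W n})" for n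
    have "\<exists>x. \<forall>n. x \<in> S n"
    proof (rule compact_decreasing_nest[OF cantor_compact[OF X]])
      fix n
      have "finite (Qs n)" using good[of n] by (simp add: good_def)
      then have "finite (fst ` {q \<in> Qs n. snd q = W n})" by simp
      moreover have "\<forall>T\<in>fst ` {q \<in> Qs n. snd q = W n}. closed T"
      proof
        fix T assume "T \<in> fst ` {q \<in> Qs n. snd q = W n}"
        then obtain q where "q \<in> Qs n" "T = fst q" by blast
        then show "closed T" using Qsub[of q n] by simp
      qed
      ultimately show "closed (S n)" unfolding S_def by (rule closed_Union)
      obtain q where "q \<in> Qs n" "snd q = W n" using W[of n] by auto
      then show "S n \<noteq> {}" using Qsub[of q n] unfolding S_def by blast
      show "S n \<subseteq> X"
      proof
        fix z assume "z \<in> S n"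
        then obtain q where "q \<in> Qs n" "z \<in> fst q" unfolding S_def by blast
        then show "z \<in> X" using Qsub[of q n] by blast
      qed
      show "S (Suc n) \<subseteq> S n"
      proof
        fix x assume "x \<in> S (Suc n)"
        then obtain q' where q': "q' \<in> Qs (Suc n)" "snd q' = W (Suc n)" "x \<in> fst q'" unfolding S_def by blast
        obtain q where q: "q \<in> Qs n" "fst q' \<subseteq> fst q" "snd q' \<subseteq> snd q"
          using ref[of n] q'(1) unfolding refines_def by blast
        have "y \<in> snd q" using q q' W[of "Suc n"] by auto
        then have "snd q = W n" using Wu q(1) by blast
        then show "x \<in> S n" unfolding S_def using q q' by blast
      qed
    qed
    then obtain x where x: "\<And>n. x \<in> S n" by blast
    have xX: "x \<in> X"
    proof -
      obtain q where "q \<in> Qs 0" "x \<in> fst q" using x[of 0] unfolding S_def by blast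
      then show ?thesis using Qsub[of q 0] by blast
    qed
    have pW: "snd (pc n x) = W n" for n
    proof -
      obtain q where q: "q \<in> Qs n" "snd q = W n" "x \<in> fst q" using x[of n] unfolding S_def by blast
      then show ?thesis using pcu[OF xX] by blast
    qed
    have "dist (s x) y < 1 / real (Suc n)" for n
      using smem[OF xX, of "Suc n"] W[of "Suc n"] pW[of "Suc n"] sm[of n] pc[OF xX, of "Suc n"]
      unfolding small_def by auto
    then have "s x = y" by (rule small_eq)
    then show "y \<in> s ` X" using xX by blast
  qed
  ultimately have "s ` X = Y" by (rule equalityI)
  with cont show ?thesis
    apply -
    apply (rule exI[where x=s])
    apply simp
    done
qed

lemma funpow_in: "i \<in> I \<Longrightarrow> p ` I \<subseteq> I \<Longrightarrow> (p ^^ k) i \<in> I"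
  by (induction k) auto

lemma fpa: "(f ^^ a) ((f ^^ b) x) = (f ^^ (a + b)) x"
  by (simp add: funpow_add)

lemma funpow_period_mult: "(p ^^ m) c = c \<Longrightarrow> (p ^^ (m * t)) c = c"
proof (induction t)
  case 0 then show ?case by simp
next
  case (Suc t)
  have "(p ^^ (m * Suc t)) c = (p ^^ m) ((p ^^ (m * t)) c)"
    by (simp add: fpa)
  then show ?case using Suc by simp
qed

definition cyc :: "nat set \<Rightarrow> (nat \<Rightarrow> nat) \<Rightarrow> nat set" where
  "cyc I p = {i \<in> I. \<exists>m>0. (p ^^ m) i = i}"

lemma cyc_reach:
  assumes I: "finite I" "p ` I \<subseteq> I" and i: "i \<in> I"
  shows "(p ^^ card I) i \<in> cyc I p"
proof -
  let ?g = "\<lambda>k. (p ^^ k) i"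
  have "?g ` {0..card I} \<subseteq> I" using funpow_in[OF i I(2)] by auto
  then have "card (?g ` {0..card I}) \<le> card I" using I(1) card_mono by blast
  then have "card {0..card I} > card (?g ` {0..card I})" by simp
  then have "\<not> inj_on ?g {0..card I}" by (rule pigeonhole)
  then obtain a b where ab: "a \<in> {0..card I}" "b \<in> {0..card I}" "a \<noteq> b" "?g a = ?g b"
    unfolding inj_on_def by blast
  then obtain a b where ab: "a < b" "b \<le> card I" "?g a = ?g b"
    by (metis atLeastAtMost_iff linorder_neqE_nat)
  define r where "r = card I - a"
  have e1: "b - a + card I = r + b" using ab by (simp add: r_def)
  have "(p ^^ (b - a)) ((p ^^ card I) i) = (p ^^ (r + b)) i"
    by (simp add: fpa e1)
  also have "\<dots> = (p ^^ r) (?g b)" by (simp add: fpa)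
  also have "\<dots> = (p ^^ r) (?g a)" using ab by simp
  also have "\<dots> = (p ^^ card I) i"
  proof -
    have e2: "r + a = card I" using ab by (simp add: r_def)
    show ?thesis by (simp only: fpa e2)
  qed
  finally show ?thesis using ab funpow_in[OF i I(2)] unfolding cyc_def
    by (intro CollectI conjI exI[of _ "b - a"]) auto
qed

lemma cyc_p:
  assumes "p ` I \<subseteq> I" "c \<in> cyc I p"
  shows "p c \<in> cyc I p"
proof -
  obtain m where m: "m > 0" "(p ^^ m) c = c" "c \<in> I" using assms by (auto simp: cyc_def)
  have "(p ^^ m) (p c) = p ((p ^^ m) c)" by (simp add: funpow_swap1)
  then show ?thesis using m assms by (auto simp: cyc_def)
qed

lemma cyc_inj:
  assumes "c1 \<in> cyc I p" "c2 \<in> cyc I p" "p c1 = p c2"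
  shows "c1 = c2"
proof -
  obtain m1 where m1: "m1 > 0" "(p ^^ m1) c1 = c1" using assms by (auto simp: cyc_def)
  obtain m2 where m2: "m2 > 0" "(p ^^ m2) c2 = c2" using assms by (auto simp: cyc_def)
  have "(p ^^ (m1 * m2)) c1 = c1" using funpow_period_mult[OF m1(2)] .
  moreover have "(p ^^ (m2 * m1)) c2 = c2" using funpow_period_mult[OF m2(2)] .
  moreover obtain M where M: "m1 * m2 = Suc M" using m1 m2 by (metis mult_pos_pos not0_implies_Suc not_gr0)
  moreover have M2: "m2 * m1 = Suc M" using M by (metis mult.commute)
  ultimately have "(p ^^ Suc M) c1 = c1" "(p ^^ Suc M) c2 = c2"
    by (simp_all only: M M2)
  then have "(p ^^ M) (p c1) = c1" "(p ^^ M) (p c2) = c2"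
    by (metis funpow_swap1 funpow.simps(2) o_apply)+
  then show ?thesis using assms(3) by metis
qed

lemma cyc_pre:
  assumes "c \<in> cyc I p" "p ` I \<subseteq> I"
  shows "\<exists>c'\<in>cyc I p. p c' = c"
proof -
  obtain m where m: "m > 0" "(p ^^ m) c = c" "c \<in> I" using assms by (auto simp: cyc_def)
  define c' where "c' = (p ^^ (m - 1)) c"
  have pc: "p c' = c" using m unfolding c'_def
    by (metis Suc_diff_1 funpow_simps_right(2) funpow_swap1 o_apply)
  have "(p ^^ m) c' = (p ^^ (m - 1)) ((p ^^ m) c)" unfolding c'_def
    by (simp add: fpa add.commute)
  then have "(p ^^ m) c' = c'" using m by (simp add: c'_def)
  moreover have "c' \<in> I" unfolding c'_def using funpow_in[OF m(3) assms(2)] .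
  ultimately show ?thesis using m pc by (auto simp: cyc_def)
qed

definition depth :: "nat set \<Rightarrow> (nat \<Rightarrow> nat) \<Rightarrow> nat \<Rightarrow> nat" where
  "depth I p i = (LEAST k. (p ^^ k) i \<in> cyc I p)"

lemma depth_le:
  assumes "finite I" "p ` I \<subseteq> I" "i \<in> I"
  shows "depth I p i \<le> card I \<and> (p ^^ depth I p i) i \<in> cyc I p"
proof -
  have c: "(p ^^ card I) i \<in> cyc I p" by (rule cyc_reach[OF assms])
  show ?thesis unfolding depth_def
    using Least_le[of "\<lambda>k. (p ^^ k) i \<in> cyc I p" "card I", OF c] LeastI[of "\<lambda>k. (p ^^ k) i \<in> cyc I p" "card I", OF c] by blast
qed

lemma depth_cyc: "i \<in> cyc I p \<Longrightarrow> depth I p i = 0"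
  unfolding depth_def by (rule Least_eq_0) simp

lemma depth_step:
  assumes I: "finite I" "p ` I \<subseteq> I" and i: "i \<in> I" "i \<notin> cyc I p"
  shows "depth I p i = Suc (depth I p (p i))"
proof -
  have pi: "p i \<in> I" using I i by auto
  obtain d where d: "depth I p i = d" by simp
  have dc: "(p ^^ d) i \<in> cyc I p" using depth_le[OF I i(1)] d by simp
  then have "d \<noteq> 0" using i by (metis funpow_0)
  then obtain d' where d': "d = Suc d'" using not0_implies_Suc by blast
  have "(p ^^ d') (p i) \<in> cyc I p" using dc d' by (simp add: funpow_swap1)
  then have le1: "depth I p (p i) \<le> d'" unfolding depth_def by (rule Least_le)
  have "(p ^^ depth I p (p i)) (p i) \<in> cyc I p" using depth_le[OF I pi] by simp
  then have "(p ^^ Suc (depth I p (p i))) i \<in> cyc I p" by (simp add: funpow_swap1)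
  then have "d \<le> Suc (depth I p (p i))" unfolding d[symmetric] depth_def by (rule Least_le)
  then show ?thesis using le1 d d' by simp
qed

definition sig :: "nat set \<Rightarrow> (nat \<Rightarrow> nat) \<Rightarrow> nat \<Rightarrow> nat" where
  "sig I p c = (THE c'. c' \<in> cyc I p \<and> p c' = c)"

lemma sig:
  assumes "p ` I \<subseteq> I" "c \<in> cyc I p"
  shows "sig I p c \<in> cyc I p \<and> p (sig I p c) = c"
proof -
  have "\<exists>!c'. c' \<in> cyc I p \<and> p c' = c"
    using cyc_pre[OF assms(2,1)] cyc_inj by blast
  then show ?thesis unfolding sig_def by (rule theI')
qed

lemma sig_p:
  assumes "p ` I \<subseteq> I" "c \<in> cyc I p"
  shows "sig I p (p c) = c"
proof -
  have pc: "p c \<in> cyc I p" using cyc_p[OF assms] .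
  have "sig I p (p c) \<in> cyc I p" "p (sig I p (p c)) = p c" using sig[OF assms(1) pc] by auto
  then show ?thesis using cyc_inj assms(2) by blast
qed

lemma cyc_sub: "cyc I p \<subseteq> I"
  by (auto simp: cyc_def)


lemma cantor_shrink:
  assumes M: "cantor_set M" and a: "a \<in> M" and e: "e > 0"
  shows "\<exists>M'. clopen_in M M' \<and> a \<in> M' \<and> M' \<subseteq> ball a e \<and> M - M' \<noteq> {}"
proof -
  obtain b where b: "b \<in> M" "b \<noteq> a" using cantor_other_point[OF M a] by blast
  obtain U where U: "clopen_in M U" "a \<in> U" "b \<notin> U" using cantor_separate[OF M a b(1)] b(2) by metis
  obtain V where V: "clopen_in M V" "a \<in> V" "V \<subseteq> ball a e" using cantor_small_nbhd[OF M a e] by blast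
  have "clopen_in M (U \<inter> V)" using U V clopen_in_Int by blast
  moreover have "b \<in> M - (U \<inter> V)" using b U by blast
  ultimately show ?thesis using U V by blast
qed

lemma cantor_tower:
  assumes W: "cantor_set W" and a: "a \<in> W"
  shows "\<exists>Mt. Mt 0 = W \<and> (\<forall>k. clopen_in W (Mt k) \<and> a \<in> Mt k \<and> Mt (Suc k) \<subseteq> Mt k
     \<and> Mt k - Mt (Suc k) \<noteq> {} \<and> Mt (Suc k) \<subseteq> ball a (1 / real (Suc k)))"
proof -
  define nxt where "nxt M k = (SOME M'. clopen_in M M' \<and> a \<in> M' \<and> M' \<subseteq> ball a (1 / real (Suc k)) \<and> M - M' \<noteq> {})" for M k
  define Mt where "Mt k = rec_nat W (\<lambda>k M. nxt M k) k" for k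
  have Mt0: "Mt 0 = W" by (simp add: Mt_def)
  have MtS: "Mt (Suc k) = nxt (Mt k) k" for k by (simp add: Mt_def)
  have nxt: "clopen_in M (nxt M k) \<and> a \<in> nxt M k \<and> nxt M k \<subseteq> ball a (1 / real (Suc k)) \<and> M - nxt M k \<noteq> {}"
    if "cantor_set M" "a \<in> M" for M k
  proof -
    have "\<exists>M'. clopen_in M M' \<and> a \<in> M' \<and> M' \<subseteq> ball a (1 / real (Suc k)) \<and> M - M' \<noteq> {}"
      using cantor_shrink[OF that] by simp
    then show ?thesis unfolding nxt_def by (rule someI_ex)
  qed
  have inv: "cantor_set (Mt k) \<and> clopen_in W (Mt k) \<and> a \<in> Mt k" for k
  proof (induction k)
    case 0 then show ?case using W a cantor_closed[OF W] by (simp add: Mt0 clopen_in_self)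
  next
    case (Suc k)
    have n: "clopen_in (Mt k) (Mt (Suc k))" "a \<in> Mt (Suc k)"
      using nxt[of "Mt k" k] Suc MtS by auto
    then have "cantor_set (Mt (Suc k))" using Suc cantor_clopen by blast
    moreover have "clopen_in W (Mt (Suc k))" using n Suc clopen_in_trans by blast
    ultimately show ?case using n by blast
  qed
  have "Mt (Suc k) \<subseteq> Mt k \<and> Mt k - Mt (Suc k) \<noteq> {} \<and> Mt (Suc k) \<subseteq> ball a (1 / real (Suc k))" for k
    using nxt[of "Mt k" k] inv[of k] MtS by (auto simp: clopen_in_def)
  then show ?thesis using Mt0 inv by blast
qed

lemma parts_nontw:
  assumes X: "cantor_set X"
  shows "\<exists>P::nat \<Rightarrow> 'a::metric_space set. (\<forall>m. clopen_in X (P m)) \<and> (\<forall>m m'. m \<noteq> m' \<longrightarrow> P m \<inter> P m' = {})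
     \<and> (\<Union>m. P m) = X \<and> (\<forall>m. P m \<noteq> {} \<longleftrightarrow> m \<le> h)"
proof -
  obtain Q :: "nat \<Rightarrow> 'a set" where Q: "\<forall>m<Suc h. clopen_in X (Q m) \<and> Q m \<noteq> {}"
      "\<forall>m<Suc h. \<forall>m'<Suc h. m \<noteq> m' \<longrightarrow> Q m \<inter> Q m' = {}" "(\<Union>m<Suc h. Q m) = X"
    using cantor_split[OF X, of "Suc h"] by auto
  define P where "P m = (if m \<le> h then Q m else {})" for m
  have clX: "closed X" using X cantor_closed by blast
  have "\<forall>m. clopen_in X (P m)" using Q clX by (auto simp: P_def clopen_in_empty)
  moreover have "\<forall>m m'. m \<noteq> m' \<longrightarrow> P m \<inter> P m' = {}" using Q by (auto simp: P_def)
  moreover have "(\<Union>m. P m) = X"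
  proof -
    have "(\<Union>m. P m) = (\<Union>m<Suc h. Q m)" by (auto simp: P_def less_Suc_eq_le split: if_splits)
    then show ?thesis using Q by simp
  qed
  moreover have "\<forall>m. P m \<noteq> {} \<longleftrightarrow> m \<le> h" using Q by (auto simp: P_def)
  ultimately show ?thesis by blast
qed

lemma tower_mono:
  assumes "\<And>k. Mt (Suc k) \<subseteq> Mt k" "k \<le> k'"
  shows "Mt k' \<subseteq> Mt k"
  using assms(2)
proof (induction k' rule: dec_induct)
  case (step n) then show ?case using assms(1)[of n] by blast
qed simp

lemma tower_layer:
  assumes mono: "\<And>k. Mt (Suc k) \<subseteq> Mt k" and sm: "\<And>k. Mt (Suc k) \<subseteq> ball a (1 / real (Suc k))"
    and y: "y \<in> Mt k" "y \<noteq> a"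
  shows "\<exists>j\<ge>k. y \<in> Mt j - Mt (Suc j)"
proof -
  have "dist a y > 0" using y by simp
  then obtain n where n: "n > 0" "inverse (real n) < dist a y" using ex_inverse_of_nat_less by blast
  have "1 / real (Suc n) < dist a y" using n
    by (smt (verit) divide_less_eq_1 inverse_eq_divide inverse_less_iff_less of_nat_0_less_iff of_nat_less_iff lessI)
  then have ex: "y \<notin> Mt (Suc n)" using sm[of n] by auto
  define j0 where "j0 = (LEAST j. y \<notin> Mt j)"
  have j0: "y \<notin> Mt j0" unfolding j0_def using ex by (rule LeastI)
  have lt: "y \<in> Mt j" if "j < j0" for j
    using not_less_Least[of j "\<lambda>j. y \<notin> Mt j"] that unfolding j0_def by blast
  have "k < j0"
  proof (rule ccontr)
    assume "\<not> k < j0"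
    then have "Mt k \<subseteq> Mt j0" using tower_mono[of Mt j0 k] mono by simp
    then show False using y j0 by blast
  qed
  then obtain j where j: "j0 = Suc j" "k \<le> j" by (metis Suc_le_eq less_imp_Suc_add le_add1)
  then have "y \<in> Mt j - Mt (Suc j)" using lt[of j] j0 by auto
  then show ?thesis using j by blast
qed

lemma parts_tw:
  assumes X: "cantor_set X"
  shows "\<exists>(P::nat \<Rightarrow> 'a::metric_space set) a. a \<in> X \<and> (\<forall>m. clopen_in X (P m) \<and> P m \<noteq> {})
     \<and> (\<forall>m m'. m \<noteq> m' \<longrightarrow> P m \<inter> P m' = {}) \<and> (\<Union>m. P m) = X - {a}
     \<and> (\<forall>k. \<exists>d>0. \<forall>y\<in>X. dist y a < d \<longrightarrow> y = a \<or> (\<exists>m\<ge>n+k. y \<in> P m))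
     \<and> (\<forall>k m. m \<ge> n + Suc k \<longrightarrow> P m \<subseteq> ball a (1 / real (Suc k)))"
proof -
  obtain Q :: "nat \<Rightarrow> 'a set" where Q: "\<forall>m<Suc n. clopen_in X (Q m) \<and> Q m \<noteq> {}"
      "\<forall>m<Suc n. \<forall>m'<Suc n. m \<noteq> m' \<longrightarrow> Q m \<inter> Q m' = {}" "(\<Union>m<Suc n. Q m) = X"
    using cantor_split[OF X, of "Suc n"] by auto
  have Qn: "clopen_in X (Q n)" "Q n \<noteq> {}" using Q(1) by auto
  then obtain a where a: "a \<in> Q n" by blast
  have cW: "cantor_set (Q n)" using cantor_clopen[OF X Qn] .
  obtain Mt where Mt: "Mt 0 = Q n" "\<And>k. clopen_in (Q n) (Mt k)" "\<And>k. a \<in> Mt k"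
    "\<And>k. Mt (Suc k) \<subseteq> Mt k" "\<And>k. Mt k - Mt (Suc k) \<noteq> {}" "\<And>k. Mt (Suc k) \<subseteq> ball a (1 / real (Suc k))"
    using cantor_tower[OF cW a] by metis
  have MtX: "clopen_in X (Mt k)" for k using clopen_in_trans[OF Qn(1) Mt(2)] .
  define P where "P m = (if m < n then Q m else Mt (m - n) - Mt (Suc (m - n)))" for m
  have aX: "a \<in> X" using a Qn by (auto simp: clopen_in_def)
  have clP: "clopen_in X (P m) \<and> P m \<noteq> {}" for m
    using Q(1) MtX Mt(5) by (auto simp: P_def clopen_in_Diff)
  have Pn: "P m \<subseteq> Q n" if "\<not> m < n" for m
    using that Mt tower_mono[of Mt 0 "m - n"] by (auto simp: P_def)
  have disj: "P m \<inter> P m' = {}" if "m \<noteq> m'" for m m'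
  proof (cases "m < n")
    case True
    show ?thesis
    proof (cases "m' < n")
      case True
      then show ?thesis using \<open>m < n\<close> Q(2) that by (auto simp: P_def)
    next
      case False
      have "Q m \<inter> Q n = {}" using Q(2) \<open>m < n\<close> by auto
      then show ?thesis using \<open>m < n\<close> Pn[OF False] by (auto simp: P_def)
    qed
  next
    case False
    show ?thesis
    proof (cases "m' < n")
      case True
      have "Q m' \<inter> Q n = {}" using Q(2) True by auto
      then show ?thesis using True Pn[OF False] by (auto simp: P_def)
    next
      case False': False
      have gen: "(Mt k - Mt (Suc k)) \<inter> (Mt k' - Mt (Suc k')) = {}" if "k < k'" for k k'
      proof -
        have "Mt k' \<subseteq> Mt (Suc k)" using tower_mono[of Mt "Suc k" k'] Mt(4) that by simp
        then show ?thesis by blast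
      qed
      have "m - n \<noteq> m' - n" using False False' that by simp
      then show ?thesis using gen[of "m - n" "m' - n"] gen[of "m' - n" "m - n"] False False'
        by (cases "m - n < m' - n") (auto simp: P_def Int_commute)
    qed
  qed
  have aP: "a \<notin> P m" for m
  proof (cases "m < n")
    case True
    have "Q m \<inter> Q n = {}" using Q(2) True by auto
    then show ?thesis using True a by (auto simp: P_def)
  next
    case False
    then show ?thesis using Mt(3) by (auto simp: P_def)
  qed
  have lay: "\<exists>m\<ge>n+k. y \<in> P m" if yy: "y \<in> Mt k" "y \<noteq> a" for y k
  proof -
    obtain j where "j \<ge> k" "y \<in> Mt j - Mt (Suc j)" using tower_layer[OF Mt(4) Mt(6) yy] by blast
    then show ?thesis by (intro exI[of _ "n + j"]) (auto simp: P_def)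
  qed
  have un: "(\<Union>m. P m) = X - {a}"
  proof
    show "(\<Union>m. P m) \<subseteq> X - {a}" using clP aP by (auto simp: clopen_in_def)
  next
    show "X - {a} \<subseteq> (\<Union>m. P m)"
    proof
      fix y assume y: "y \<in> X - {a}"
      then obtain m where m: "m < Suc n" "y \<in> Q m" using Q(3) by auto
      show "y \<in> (\<Union>m. P m)"
      proof (cases "m < n")
        case True then show ?thesis using m by (auto simp: P_def intro!: exI[of _ m])
      next
        case False
        then have "m = n" using m by simp
        then have "y \<in> Mt 0" using m Mt(1) by simp
        then show ?thesis using lay[of y 0] y by blast
      qed
    qed
  qed
  have nb: "\<exists>d>0. \<forall>y\<in>X. dist y a < d \<longrightarrow> y = a \<or> (\<exists>m\<ge>n+k. y \<in> P m)" for k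
  proof -
    obtain d where d: "d > 0" "\<forall>y\<in>X. dist y a < d \<longrightarrow> y \<in> Mt k"
      using clopen_in_nbhd[OF MtX Mt(3)] by blast
    then show ?thesis using lay by blast
  qed
  have smP: "P m \<subseteq> ball a (1 / real (Suc k))" if "m \<ge> n + Suc k" for k m
  proof -
    have "P m \<subseteq> Mt (m - n)" using that by (auto simp: P_def)
    also have "\<dots> \<subseteq> Mt (Suc k)" using tower_mono[of Mt "Suc k" "m - n"] Mt(4) that by simp
    finally show ?thesis using Mt(6)[of k] by blast
  qed
  show ?thesis
    apply (rule exI[where x=P])
    apply (rule exI[where x=a])
    using aX clP disj un nb smP by blast
qed





locale cset =
  fixes K :: "'a::metric_space set" and T :: "'a \<Rightarrow> 'a" and Ks :: "nat \<Rightarrow> 'a set" and N :: nat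
  assumes cK: "cantor_set K"
    and endo: "endomorphism K T"
    and cKs: "\<And>i. i \<in> {1..N} \<Longrightarrow> cantor_set (Ks i)"
    and dKs: "\<And>i j. i \<in> {1..N} \<Longrightarrow> j \<in> {1..N} \<Longrightarrow> i \<noteq> j \<Longrightarrow> Ks i \<inter> Ks j = {}"
    and Kun: "K = (\<Union>i\<in>{1..N}. Ks i)"
begin

abbreviation "I \<equiv> {1..N}"

definition A where "A i = {x \<in> K. T x \<in> Ks i}"
definition B where "B i j = A i \<inter> Ks j"

lemma Tcont: "continuous_on K T" and TK: "T ` K = K"
  using endo by (auto simp: endomorphism_def)

lemma clK: "closed K" using cantor_closed[OF cK] .

lemma finI: "finite I" by simp

lemma cardI: "card I = N" by simp

lemma Ks_sub: "i \<in> I \<Longrightarrow> Ks i \<subseteq> K" using Kun by auto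

lemma Ks_uniq: "i \<in> I \<Longrightarrow> j \<in> I \<Longrightarrow> x \<in> Ks i \<Longrightarrow> x \<in> Ks j \<Longrightarrow> i = j"
  using dKs by blast

lemma Ks_ex: "x \<in> K \<Longrightarrow> \<exists>i\<in>I. x \<in> Ks i"
  using Kun by blast

lemma Ks_ex1: "x \<in> K \<Longrightarrow> \<exists>!i. i \<in> I \<and> x \<in> Ks i"
  using Ks_ex Ks_uniq by blast

lemma A_uniq: "i \<in> I \<Longrightarrow> j \<in> I \<Longrightarrow> x \<in> A i \<Longrightarrow> x \<in> A j \<Longrightarrow> i = j"
  unfolding A_def using Ks_uniq by blast

lemma A_ex: "x \<in> K \<Longrightarrow> \<exists>i\<in>I. x \<in> A i"
proof -
  assume x: "x \<in> K"
  then have "T x \<in> K" using TK by blast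
  then obtain i where "i \<in> I" "T x \<in> Ks i" using Ks_ex by blast
  then show ?thesis using x by (auto simp: A_def)
qed

lemma A_ex1: "x \<in> K \<Longrightarrow> \<exists>!i. i \<in> I \<and> x \<in> A i"
  using A_ex A_uniq by blast

lemma A_sub: "A i \<subseteq> K" by (auto simp: A_def)

lemma Ks_clopen: "i \<in> I \<Longrightarrow> clopen_in K (Ks i)"
proof -
  assume i: "i \<in> I"
  have "K - Ks i = (\<Union>j\<in>I - {i}. Ks j)"
  proof
    show "K - Ks i \<subseteq> (\<Union>j\<in>I - {i}. Ks j)" using Ks_ex by fastforce
    show "(\<Union>j\<in>I - {i}. Ks j) \<subseteq> K - Ks i" using Ks_uniq Ks_sub i by blast
  qed
  moreover have "\<forall>j\<in>I - {i}. closed (Ks j)" using cKs cantor_closed by blast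
  then have "closed (\<Union>j\<in>I - {i}. Ks j)" by (intro closed_UN) auto
  ultimately show ?thesis using Ks_sub[OF i] cantor_closed[OF cKs[OF i]] by (simp add: clopen_in_def)
qed

lemma A_closed: "i \<in> I \<Longrightarrow> closed (A i)"
proof -
  assume i: "i \<in> I"
  have "A i = K \<inter> T -` Ks i" by (auto simp: A_def)
  then show ?thesis using continuous_closed_preimage[OF Tcont clK cantor_closed[OF cKs[OF i]]] by simp
qed

lemma A_clopen: "i \<in> I \<Longrightarrow> clopen_in K (A i)"
proof -
  assume i: "i \<in> I"
  have "K - A i = (\<Union>j\<in>I - {i}. A j)"
  proof
    show "K - A i \<subseteq> (\<Union>j\<in>I - {i}. A j)"
    proof
      fix x assume "x \<in> K - A i"
      then obtain j where "j \<in> I" "x \<in> A j" using A_ex[of x] by auto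
      then show "x \<in> (\<Union>j\<in>I - {i}. A j)" using \<open>x \<in> K - A i\<close> by auto
    qed
    show "(\<Union>j\<in>I - {i}. A j) \<subseteq> K - A i" using A_uniq A_sub i by blast
  qed
  moreover have "closed (\<Union>j\<in>I - {i}. A j)" using A_closed by (intro closed_UN) auto
  ultimately show ?thesis using A_sub A_closed[OF i] by (simp add: clopen_in_def)
qed

lemma B_clopen: "i \<in> I \<Longrightarrow> j \<in> I \<Longrightarrow> clopen_in K (B i j)"
  unfolding B_def using A_clopen Ks_clopen clopen_in_Int by blast

lemma B_sub: "B i j \<subseteq> A i" "B i j \<subseteq> Ks j" by (auto simp: B_def)

lemma B_disj: "x \<in> B i j \<Longrightarrow> x \<in> B i' j' \<Longrightarrow> i \<in> I \<Longrightarrow> j \<in> I \<Longrightarrow> i' \<in> I \<Longrightarrow> j' \<in> I \<Longrightarrow> i = i' \<and> j = j'"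
  unfolding B_def using A_uniq Ks_uniq by blast

lemma B_cantor: "i \<in> I \<Longrightarrow> j \<in> I \<Longrightarrow> B i j \<noteq> {} \<Longrightarrow> cantor_set (B i j)"
  using cantor_clopen[OF cK B_clopen] by blast

lemma exB_in: "i \<in> I \<Longrightarrow> \<exists>j\<in>I. B i j \<noteq> {}"
proof -
  assume i: "i \<in> I"
  obtain y where y: "y \<in> Ks i" using cantor_ne[OF cKs[OF i]] by blast
  then have "y \<in> K" using Ks_sub[OF i] by blast
  then obtain x where x: "x \<in> K" "T x = y" using TK by (metis imageE)
  then obtain j where "j \<in> I" "x \<in> Ks j" using Ks_ex by blast
  then show ?thesis using x y by (auto simp: B_def A_def)
qed

lemma exB_out: "j \<in> I \<Longrightarrow> \<exists>i\<in>I. B i j \<noteq> {}"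
proof -
  assume j: "j \<in> I"
  obtain x where x: "x \<in> Ks j" using cantor_ne[OF cKs[OF j]] by blast
  then have "x \<in> K" using Ks_sub[OF j] by blast
  then obtain i where "i \<in> I" "x \<in> A i" using A_ex by blast
  then show ?thesis using x by (auto simp: B_def)
qed

definition p where "p i = (SOME j. j \<in> I \<and> B i j \<noteq> {})"

lemma p_mem: "i \<in> I \<Longrightarrow> p i \<in> I \<and> B i (p i) \<noteq> {}"
proof -
  assume "i \<in> I"
  then have "\<exists>j. j \<in> I \<and> B i j \<noteq> {}" using exB_in by blast
  then show ?thesis unfolding p_def by (rule someI_ex)
qed

lemma pI: "p ` I \<subseteq> I" using p_mem by blast

abbreviation "C \<equiv> cyc I p"
abbreviation "dep \<equiv> depth I p"
abbreviation "sg \<equiv> sig I p"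

definition h where "h j = N - dep j"

definition tw where "tw i j \<longleftrightarrow> i \<in> C \<and> j = p i"

lemma C_sub: "C \<subseteq> I" by (rule cyc_sub)

lemma h_C: "c \<in> C \<Longrightarrow> h c = N" by (simp add: h_def depth_cyc)

definition twspec where
  "twspec X P a \<longleftrightarrow> a \<in> X \<and> (\<forall>m. clopen_in X (P m) \<and> P m \<noteq> {})
     \<and> (\<forall>m m'. m \<noteq> m' \<longrightarrow> P m \<inter> P m' = {}) \<and> (\<Union>m. P m) = X - {a}
     \<and> (\<forall>k. \<exists>d>0. \<forall>y\<in>X. dist y a < d \<longrightarrow> y = a \<or> (\<exists>m\<ge>N+k. y \<in> P m))
     \<and> (\<forall>k m. m \<ge> N + Suc k \<longrightarrow> P m \<subseteq> ball a (1 / real (Suc k)))"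

definition ntspec where
  "ntspec X hh P \<longleftrightarrow> (\<forall>m. clopen_in X (P m)) \<and> (\<forall>m m'. m \<noteq> m' \<longrightarrow> P m \<inter> P m' = {})
     \<and> (\<Union>m. P m) = X \<and> (\<forall>m. P m \<noteq> {} \<longleftrightarrow> m \<le> hh)"

definition TW where "TW i = (SOME q. twspec (B i (p i)) (fst q) (snd q))"
definition a where "a i = snd (TW i)"

definition prt where
  "prt i j = (if B i j = {} then (\<lambda>_. {}) else if tw i j then fst (TW i)
              else (SOME P. ntspec (B i j) (h j) P))"

lemma TW: "i \<in> C \<Longrightarrow> twspec (B i (p i)) (fst (TW i)) (snd (TW i))"
proof -
  assume i: "i \<in> C"
  then have iI: "i \<in> I" using C_sub by blast
  have "cantor_set (B i (p i))" using B_cantor p_mem iI by blast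
  then have "\<exists>P aa. twspec (B i (p i)) P aa"
    unfolding twspec_def by (rule parts_tw)
  then obtain P aa where "twspec (B i (p i)) P aa" by blast
  then have "\<exists>q. twspec (B i (p i)) (fst q) (snd q)" by (intro exI[of _ "(P, aa)"]) simp
  then show ?thesis unfolding TW_def by (rule someI_ex)
qed

lemma prt_tw: "i \<in> C \<Longrightarrow> twspec (B i (p i)) (prt i (p i)) (a i)"
proof -
  assume i: "i \<in> C"
  then have "B i (p i) \<noteq> {}" using p_mem C_sub by blast
  then show ?thesis using TW[OF i] i by (simp add: prt_def tw_def a_def)
qed

lemma prt_nt: "i \<in> I \<Longrightarrow> j \<in> I \<Longrightarrow> B i j \<noteq> {} \<Longrightarrow> \<not> tw i j \<Longrightarrow> ntspec (B i j) (h j) (prt i j)"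
proof -
  assume ij: "i \<in> I" "j \<in> I" "B i j \<noteq> {}" "\<not> tw i j"
  have "\<exists>P. ntspec (B i j) (h j) P"
    unfolding ntspec_def by (rule parts_nontw[OF B_cantor[OF ij(1-3)]])
  then have "ntspec (B i j) (h j) (SOME P. ntspec (B i j) (h j) P)" by (rule someI_ex)
  then show ?thesis using ij by (simp add: prt_def)
qed

end

context cset begin

lemma twD:
  assumes "twspec X P aa"
  shows "aa \<in> X" "\<And>m. clopen_in X (P m)" "\<And>m. P m \<noteq> {}"
    "\<And>m m'. m \<noteq> m' \<Longrightarrow> P m \<inter> P m' = {}" "(\<Union>m. P m) = X - {aa}"
    "\<And>k. \<exists>d>0. \<forall>y\<in>X. dist y aa < d \<longrightarrow> y = aa \<or> (\<exists>m\<ge>N+k. y \<in> P m)"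
    "\<And>k m. m \<ge> N + Suc k \<Longrightarrow> P m \<subseteq> ball aa (1 / real (Suc k))"
  using assms unfolding twspec_def by simp_all

lemma ntD:
  assumes "ntspec X hh P"
  shows "\<And>m. clopen_in X (P m)" "\<And>m m'. m \<noteq> m' \<Longrightarrow> P m \<inter> P m' = {}"
     "(\<Union>m. P m) = X" "\<And>m. P m \<noteq> {} \<longleftrightarrow> m \<le> hh"
  using assms unfolding ntspec_def by simp_all

lemma prt_empty: "B i j = {} \<Longrightarrow> prt i j m = {}"
  unfolding prt_def by (rule if_P[THEN fun_cong, THEN trans]) simp_all

lemma tw_I: "tw i j \<Longrightarrow> i \<in> C \<and> j = p i" by (simp add: tw_def)

lemma prt_clopenB: "i \<in> I \<Longrightarrow> j \<in> I \<Longrightarrow> clopen_in (B i j) (prt i j m)"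
proof -
  assume ij: "i \<in> I" "j \<in> I"
  show ?thesis
  proof (cases "B i j = {}")
    case True then show ?thesis using prt_empty[OF True, of m] by (simp add: clopen_in_def)
  next
    case False
    show ?thesis
    proof (cases "tw i j")
      case True
      then have "i \<in> C" "j = p i" by (auto simp: tw_def)
      then show ?thesis using twD(2)[OF prt_tw[of i]] by simp
    next
      case nt: False
      then show ?thesis using ntD(1)[OF prt_nt[OF ij False nt]] by simp
    qed
  qed
qed

lemma prt_clopen: "i \<in> I \<Longrightarrow> j \<in> I \<Longrightarrow> clopen_in K (prt i j m)"
  using clopen_in_trans[OF B_clopen prt_clopenB] by blast

lemma prt_sub: "i \<in> I \<Longrightarrow> j \<in> I \<Longrightarrow> prt i j m \<subseteq> B i j"
  using prt_clopenB by (simp add: clopen_in_def)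

lemma prt_subK: "i \<in> I \<Longrightarrow> j \<in> I \<Longrightarrow> prt i j m \<subseteq> K"
  using prt_clopen by (simp add: clopen_in_def)

lemma prt_disj: "i \<in> I \<Longrightarrow> j \<in> I \<Longrightarrow> m \<noteq> m' \<Longrightarrow> prt i j m \<inter> prt i j m' = {}"
proof -
  assume ij: "i \<in> I" "j \<in> I" and mm: "m \<noteq> m'"
  show ?thesis
  proof (cases "B i j = {}")
    case True then show ?thesis using prt_empty[OF True] by simp
  next
    case False
    show ?thesis
    proof (cases "tw i j")
      case True
      then have "i \<in> C" "j = p i" by (auto simp: tw_def)
      then show ?thesis using twD(4)[OF prt_tw[of i]] mm by simp
    next
      case nt: False
      then show ?thesis using ntD(2)[OF prt_nt[OF ij False nt]] mm by simp
    qed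
  qed
qed

lemma a_B: "i \<in> C \<Longrightarrow> a i \<in> B i (p i)"
  using twD(1)[OF prt_tw] by simp

lemma a_notprt: "i \<in> C \<Longrightarrow> a i \<notin> prt i (p i) m"
proof -
  assume i: "i \<in> C"
  have "(\<Union>m. prt i (p i) m) = B i (p i) - {a i}" using twD(5)[OF prt_tw[OF i]] .
  then show ?thesis by blast
qed

lemma prt_cover: "i \<in> I \<Longrightarrow> j \<in> I \<Longrightarrow> x \<in> B i j \<Longrightarrow> (tw i j \<and> x = a i) \<or> (\<exists>m. x \<in> prt i j m)"
proof -
  assume ij: "i \<in> I" "j \<in> I" and x: "x \<in> B i j"
  then have ne: "B i j \<noteq> {}" by blast
  show ?thesis
  proof (cases "tw i j")
    case True
    then have ii: "i \<in> C" "j = p i" by (auto simp: tw_def)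
    have "(\<Union>m. prt i (p i) m) = B i (p i) - {a i}" using twD(5)[OF prt_tw[OF ii(1)]] .
    then show ?thesis using x ii True by blast
  next
    case nt: False
    have "(\<Union>m. prt i j m) = B i j" using ntD(3)[OF prt_nt[OF ij ne nt]] .
    then show ?thesis using x by blast
  qed
qed

lemma prt_ne: "i \<in> I \<Longrightarrow> j \<in> I \<Longrightarrow> prt i j m \<noteq> {} \<longleftrightarrow> B i j \<noteq> {} \<and> (m \<le> h j \<or> tw i j)"
proof -
  assume ij: "i \<in> I" "j \<in> I"
  show ?thesis
  proof (cases "B i j = {}")
    case True then show ?thesis using prt_empty[OF True] by simp
  next
    case False
    show ?thesis
    proof (cases "tw i j")
      case True
      then have "i \<in> C" "j = p i" by (auto simp: tw_def)
      then show ?thesis using twD(3)[OF prt_tw[of i]] False True by simp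
    next
      case nt: False
      then show ?thesis using ntD(4)[OF prt_nt[OF ij False nt]] False nt by simp
    qed
  qed
qed

lemma tw_nbhd:
  assumes i: "i \<in> C"
  shows "\<exists>d>0. \<forall>y\<in>K. dist y (a i) < d \<longrightarrow> y = a i \<or> (\<exists>m\<ge>N+k. y \<in> prt i (p i) m)"
proof -
  have iI: "i \<in> I" "p i \<in> I" using i C_sub p_mem by blast+
  obtain d1 where d1: "d1 > 0" "\<forall>y\<in>B i (p i). dist y (a i) < d1 \<longrightarrow> y = a i \<or> (\<exists>m\<ge>N+k. y \<in> prt i (p i) m)"
    using twD(6)[OF prt_tw[OF i]] by blast
  obtain d2 where d2: "d2 > 0" "\<forall>y\<in>K. dist y (a i) < d2 \<longrightarrow> y \<in> B i (p i)"
    using clopen_in_nbhd[OF B_clopen[OF iI] a_B[OF i]] by blast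
  show ?thesis
    apply (rule exI[where x="min d1 d2"])
    using d1 d2 by auto
qed

lemma tw_small: "i \<in> C \<Longrightarrow> m \<ge> N + Suc k \<Longrightarrow> prt i (p i) m \<subseteq> ball (a i) (1 / real (Suc k))"
  using twD(7)[OF prt_tw] by blast

end


context cset begin

definition L where "L m = (\<Union>i\<in>I. \<Union>j\<in>I. prt i j m)"
definition Orb where "Orb = a ` C"

lemma L_clopen: "clopen_in K (L m)"
  unfolding L_def using clK prt_clopen
  by (intro clopen_in_UN) auto

lemma a_mem: "c \<in> C \<Longrightarrow> a c \<in> A c \<and> a c \<in> Ks (p c) \<and> a c \<in> K"
  using a_B[of c] B_sub A_sub by blast

lemma O_sub: "Orb \<subseteq> K" using a_mem by (auto simp: Orb_def)

lemma O_L: "x \<in> Orb \<Longrightarrow> x \<notin> L m"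
proof
  assume "x \<in> Orb" "x \<in> L m"
  then obtain c where c: "c \<in> C" "x = a c" by (auto simp: Orb_def)
  then have cI: "c \<in> I" "p c \<in> I" using C_sub p_mem by blast+
  obtain i j where ij: "i \<in> I" "j \<in> I" "x \<in> prt i j m" using \<open>x \<in> L m\<close> by (auto simp: L_def)
  then have "x \<in> B i j" using prt_sub by blast
  moreover have "x \<in> B c (p c)" using a_B c by simp
  ultimately have "i = c" "j = p c" using B_disj ij cI by blast+
  then show False using a_notprt[OF c(1)] ij c by simp
qed

lemma L_unique: "x \<in> L m \<Longrightarrow> x \<in> L m' \<Longrightarrow> m = m'"
proof (rule ccontr)
  assume x: "x \<in> L m" "x \<in> L m'" "m \<noteq> m'"
  obtain i j where ij: "i \<in> I" "j \<in> I" "x \<in> prt i j m" using x by (auto simp: L_def)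
  obtain i' j' where ij': "i' \<in> I" "j' \<in> I" "x \<in> prt i' j' m'" using x by (auto simp: L_def)
  have "x \<in> B i j" "x \<in> B i' j'" using prt_sub ij ij' by blast+
  then have "i = i'" "j = j'" using B_disj ij ij' by blast+
  then show False using prt_disj[OF ij(1,2) x(3)] ij ij' by blast
qed

lemma L_cover: "x \<in> K \<Longrightarrow> x \<notin> Orb \<Longrightarrow> \<exists>m. x \<in> L m"
proof -
  assume x: "x \<in> K" "x \<notin> Orb"
  obtain i where i: "i \<in> I" "x \<in> A i" using A_ex x by blast
  obtain j where j: "j \<in> I" "x \<in> Ks j" using Ks_ex x by blast
  have "x \<in> B i j" using i j by (simp add: B_def)
  then have "(tw i j \<and> x = a i) \<or> (\<exists>m. x \<in> prt i j m)" using prt_cover i j by blast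
  moreover have "\<not> (tw i j \<and> x = a i)" using x by (auto simp: tw_def Orb_def)
  ultimately obtain m where "x \<in> prt i j m" by blast
  then have "x \<in> L m" unfolding L_def using i j by blast
  then show ?thesis by blast
qed

lemma L_sub: "L m \<subseteq> K" using L_clopen by (simp add: clopen_in_def)

definition lay where "lay x = (THE m. x \<in> L m)"
definition idx where "idx x = (THE i. i \<in> I \<and> x \<in> A i)"

lemma lay: "x \<in> L m \<Longrightarrow> lay x = m"
  unfolding lay_def using L_unique by blast

lemma idx: "i \<in> I \<Longrightarrow> x \<in> A i \<Longrightarrow> idx x = i"
  unfolding idx_def using A_uniq by blast

lemma idx_mem: "x \<in> K \<Longrightarrow> idx x \<in> I \<and> x \<in> A (idx x)"
  using A_ex idx by blast

definition Src where "Src m i = L m \<inter> A i"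
definition Tgt where "Tgt m i = L m \<inter> Ks i"

lemma Src_clopen: "i \<in> I \<Longrightarrow> clopen_in K (Src m i)"
  unfolding Src_def using L_clopen A_clopen clopen_in_Int by blast

lemma Tgt_clopen: "i \<in> I \<Longrightarrow> clopen_in K (Tgt m i)"
  unfolding Tgt_def using L_clopen Ks_clopen clopen_in_Int by blast

lemma Tgt_prt: "i \<in> I \<Longrightarrow> y \<in> Tgt m i \<Longrightarrow> \<exists>i'\<in>I. y \<in> prt i' i m"
proof -
  assume i: "i \<in> I" and y: "y \<in> Tgt m i"
  then obtain i' j where ij: "i' \<in> I" "j \<in> I" "y \<in> prt i' j m" by (auto simp: Tgt_def L_def)
  then have "y \<in> Ks j" using prt_sub B_sub by blast
  moreover have "y \<in> Ks i" using y by (simp add: Tgt_def)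
  ultimately have "j = i" using Ks_uniq ij i by blast
  then show ?thesis using ij by blast
qed

lemma prt_L: "i \<in> I \<Longrightarrow> j \<in> I \<Longrightarrow> prt i j m \<subseteq> L m"
  unfolding L_def by blast

lemma prt_Src: "i \<in> I \<Longrightarrow> j \<in> I \<Longrightarrow> prt i j m \<subseteq> Src m i"
proof -
  assume ij: "i \<in> I" "j \<in> I"
  have "prt i j m \<subseteq> A i" using prt_sub[OF ij] B_sub(1)[of i j] by (rule order_trans)
  then show ?thesis using prt_L[OF ij] unfolding Src_def by blast
qed

lemma prt_Tgt: "i \<in> I \<Longrightarrow> j \<in> I \<Longrightarrow> prt i j m \<subseteq> Tgt m j"
proof -
  assume ij: "i \<in> I" "j \<in> I"
  have "prt i j m \<subseteq> Ks j" using prt_sub[OF ij] B_sub(2)[of i j] by (rule order_trans)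
  then show ?thesis using prt_L[OF ij] unfolding Tgt_def by blast
qed

lemma tw_sg: "c \<in> C \<Longrightarrow> tw (sg c) c \<and> sg c \<in> C \<and> p (sg c) = c"
  using sig[OF pI] by (auto simp: tw_def)

lemma N1: "i \<in> I \<Longrightarrow> Tgt 0 i \<noteq> {}"
proof -
  assume i: "i \<in> I"
  obtain i' where i': "i' \<in> I" "B i' i \<noteq> {}" using exB_out[OF i] by blast
  then have "prt i' i 0 \<noteq> {}" using prt_ne[OF i'(1) i] by simp
  then show ?thesis using prt_Tgt[OF i'(1) i] by blast
qed

lemma N2: "i \<in> I \<Longrightarrow> Tgt m i \<noteq> {} \<Longrightarrow> Src (Suc m) i \<noteq> {}"
proof -
  assume i: "i \<in> I" and ne: "Tgt m i \<noteq> {}"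
  obtain y where "y \<in> Tgt m i" using ne by blast
  then obtain i' where i': "i' \<in> I" "y \<in> prt i' i m" using Tgt_prt[OF i] by blast
  then have ne': "m \<le> h i \<or> tw i' i" using prt_ne[OF i'(1) i] by blast
  have pi: "p i \<in> I" "B i (p i) \<noteq> {}" using p_mem[OF i] by auto
  have "Suc m \<le> h (p i) \<or> tw i (p i)"
  proof (cases "i \<in> C")
    case True then show ?thesis by (simp add: tw_def)
  next
    case False
    then have "\<not> tw i' i" using cyc_p[OF pI] by (auto simp: tw_def)
    then have m: "m \<le> h i" using ne' by simp
    have d: "dep i = Suc (dep (p i))" using depth_step[OF finI pI i False] .
    have "dep i \<le> N" using depth_le[OF finI pI i] by simp
    then have "Suc m \<le> h (p i)" using m d by (simp add: h_def)
    then show ?thesis by simp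
  qed
  then have "prt i (p i) (Suc m) \<noteq> {}" using prt_ne[OF i pi(1)] pi(2) by simp
  then show ?thesis using prt_Src[OF i pi(1)] by blast
qed

lemma N3: "c \<in> C \<Longrightarrow> N < m \<Longrightarrow> Tgt m c \<subseteq> prt (sg c) c m"
proof
  fix y assume c: "c \<in> C" and m: "N < m" and y: "y \<in> Tgt m c"
  have cI: "c \<in> I" using c C_sub by blast
  obtain i' where i': "i' \<in> I" "y \<in> prt i' c m" using Tgt_prt[OF cI y] by blast
  then have "m \<le> h c \<or> tw i' c" using prt_ne[OF i'(1) cI] by blast
  moreover have "h c = N" using h_C[OF c] .
  ultimately have "tw i' c" using m by simp
  then have "i' \<in> C" "c = p i'" by (auto simp: tw_def)
  then have "i' = sg c" using sig_p[OF pI] by simp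
  then show "y \<in> prt (sg c) c m" using i' by simp
qed

end




lemma fin_periodic:
  assumes F: "finite F" "f ` F \<subseteq> F" and n: "(f ^^ n) x \<in> F"
  shows "finally_periodic f x"
proof -
  let ?y = "(f ^^ n) x"
  have inF: "(f ^^ k) ?y \<in> F" for k
    by (induction k) (use n F in auto)
  let ?g = "\<lambda>k. (f ^^ k) ?y"
  have "?g ` {0..card F} \<subseteq> F" using inF by auto
  then have "card (?g ` {0..card F}) \<le> card F" using F(1) card_mono by blast
  then have "card {0..card F} > card (?g ` {0..card F})" by simp
  then have "\<not> inj_on ?g {0..card F}" by (rule pigeonhole)
  then obtain u v where uv: "u \<in> {0..card F}" "v \<in> {0..card F}" "u \<noteq> v" "?g u = ?g v"
    unfolding inj_on_def by blast
  then obtain u v where uv: "u < v" "?g u = ?g v" by (metis linorder_neqE_nat)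
  have e1: "(f ^^ (n + u)) x = (f ^^ (n + v)) x" using uv(2) by (simp add: fpa add.commute)
  have "(f ^^ ((v - u) + (n + u + 1))) x = f ((f ^^ (n + v)) x)"
  proof -
    have e: "(v - u) + (n + u + 1) = Suc (n + v)" using uv by simp
    show ?thesis by (simp only: e funpow.simps(2) o_apply)
  qed
  also have "\<dots> = f ((f ^^ (n + u)) x)" using e1 by simp
  also have "\<dots> = (f ^^ (n + u + 1)) x" by simp
  finally show ?thesis unfolding finally_periodic_def
    using uv by (intro exI[of _ "n + u + 1"] exI[of _ "v - u"]) simp
qed

context cset begin

definition z where "z i = (SOME y. y \<in> Tgt 0 i)"

lemma z: "i \<in> I \<Longrightarrow> z i \<in> Tgt 0 i"
  unfolding z_def using N1 by (meson ex_in_conv someI_ex)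

definition S where "S m i = (SOME s. continuous_on (Src m i) s \<and> s ` Src m i = Tgt (m - 1) i)"

lemma S: "i \<in> I \<Longrightarrow> Src m i \<noteq> {} \<Longrightarrow> Tgt (m - 1) i \<noteq> {} \<Longrightarrow>
    continuous_on (Src m i) (S m i) \<and> S m i ` Src m i = Tgt (m - 1) i"
proof -
  assume i: "i \<in> I" and ne: "Src m i \<noteq> {}" "Tgt (m - 1) i \<noteq> {}"
  have "cantor_set (Src m i)" using cantor_clopen[OF cK Src_clopen[OF i] ne(1)] .
  moreover have "cantor_set (Tgt (m - 1) i)" using cantor_clopen[OF cK Tgt_clopen[OF i] ne(2)] .
  ultimately have "\<exists>s. continuous_on (Src m i) s \<and> s ` Src m i = Tgt (m - 1) i" by (rule cantor_surj)
  then show ?thesis unfolding S_def by (rule someI_ex)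
qed

definition g where "g m i = (if 1 \<le> m \<and> Tgt (m - 1) i \<noteq> {} then S m i else (\<lambda>_. z i))"

lemma g1: "1 \<le> m \<Longrightarrow> Tgt (m - 1) i \<noteq> {} \<Longrightarrow> g m i = S m i"
  by (simp add: g_def)

lemma g2: "\<not> (1 \<le> m \<and> Tgt (m - 1) i \<noteq> {}) \<Longrightarrow> g m i = (\<lambda>_. z i)"
  unfolding g_def by (rule if_not_P)

definition f where "f x = (if x \<in> Orb then a (sg (idx x)) else g (lay x) (idx x) x)"

lemma f_O: "c \<in> C \<Longrightarrow> f (a c) = a (sg c)"
proof -
  assume c: "c \<in> C"
  have "idx (a c) = c" using idx a_mem[OF c] C_sub c by blast
  moreover have "a c \<in> Orb" using c by (simp add: Orb_def)
  ultimately show ?thesis by (simp add: f_def)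
qed

lemma Src_L: "x \<in> Src m i \<Longrightarrow> x \<in> L m" by (simp add: Src_def)

lemma f_L: "i \<in> I \<Longrightarrow> x \<in> Src m i \<Longrightarrow> f x = g m i x"
proof -
  assume i: "i \<in> I" and x: "x \<in> Src m i"
  have "x \<notin> Orb" using O_L Src_L[OF x] by blast
  moreover have "lay x = m" using lay Src_L[OF x] by blast
  moreover have "idx x = i" using idx i x by (simp add: Src_def)
  ultimately show ?thesis by (simp add: f_def)
qed

lemma g_cont: "i \<in> I \<Longrightarrow> Src m i \<noteq> {} \<Longrightarrow> continuous_on (Src m i) (g m i)"
proof -
  assume i: "i \<in> I" and ne: "Src m i \<noteq> {}"
  show ?thesis
  proof (cases "1 \<le> m \<and> Tgt (m - 1) i \<noteq> {}")
    case True then show ?thesis using S[OF i ne] g1 by simp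
  next
    case False then show ?thesis using g2[OF False] by simp
  qed
qed

lemma g_S: "i \<in> I \<Longrightarrow> x \<in> Src m i \<Longrightarrow> 1 \<le> m \<Longrightarrow> Tgt (m - 1) i \<noteq> {} \<Longrightarrow> g m i x \<in> Tgt (m - 1) i"
proof -
  assume i: "i \<in> I" and x: "x \<in> Src m i" and m: "1 \<le> m" "Tgt (m - 1) i \<noteq> {}"
  have "Src m i \<noteq> {}" using x by blast
  then show ?thesis using S[OF i _ m(2)] m x g1 by auto
qed

lemma g_Ks: "i \<in> I \<Longrightarrow> x \<in> Src m i \<Longrightarrow> g m i x \<in> Ks i"
proof -
  assume i: "i \<in> I" and x: "x \<in> Src m i"
  show ?thesis
  proof (cases "1 \<le> m \<and> Tgt (m - 1) i \<noteq> {}")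
    case True then show ?thesis using g_S[OF i x] by (simp add: Tgt_def)
  next
    case False then show ?thesis using z[OF i] g2[OF False] by (simp add: Tgt_def)
  qed
qed

lemma x_Src: "x \<in> K \<Longrightarrow> x \<notin> Orb \<Longrightarrow> x \<in> Src (lay x) (idx x)"
proof -
  assume x: "x \<in> K" "x \<notin> Orb"
  obtain m where "x \<in> L m" using L_cover x by blast
  then have "x \<in> L (lay x)" using lay by simp
  then show ?thesis using idx_mem[OF x(1)] by (simp add: Src_def)
qed

lemma f_Ks: "x \<in> K \<Longrightarrow> f x \<in> Ks (idx x)"
proof -
  assume x: "x \<in> K"
  show ?thesis
  proof (cases "x \<in> Orb")
    case True
    then obtain c where c: "c \<in> C" "x = a c" by (auto simp: Orb_def)
    have "idx x = c" using idx a_mem[OF c(1)] C_sub c by blast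
    moreover have "a (sg c) \<in> Ks c" using a_mem[of "sg c"] tw_sg[OF c(1)] by simp
    ultimately show ?thesis using f_O c by simp
  next
    case False
    have "x \<in> Src (lay x) (idx x)" using x_Src x False by blast
    then show ?thesis using f_L g_Ks idx_mem[OF x] by metis
  qed
qed

lemma f_K: "x \<in> K \<Longrightarrow> f x \<in> K"
  using f_Ks idx_mem Ks_sub by blast

end



context cset begin

lemma f_cont: "continuous_on K f"
  unfolding continuous_on_iff
proof (intro ballI allI impI)
  fix x and e :: real assume x: "x \<in> K" and e: "e > 0"
  show "\<exists>d>0. \<forall>y\<in>K. dist y x < d \<longrightarrow> dist (f y) (f x) < e"
  proof (cases "x \<in> Orb")
    case False
    define m where "m = lay x"
    define i where "i = idx x"
    have xs: "x \<in> Src m i" using x_Src[OF x False] by (simp add: m_def i_def)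
    have i: "i \<in> I" using idx_mem[OF x] by (simp add: i_def)
    obtain d1 where d1: "d1 > 0" "\<forall>y\<in>K. dist y x < d1 \<longrightarrow> y \<in> Src m i"
      using clopen_in_nbhd[OF Src_clopen[OF i] xs] by blast
    have "continuous_on (Src m i) (g m i)" using g_cont[OF i] xs by blast
    then obtain d2 where d2: "d2 > 0" "\<forall>y\<in>Src m i. dist y x < d2 \<longrightarrow> dist (g m i y) (g m i x) < e"
      using xs e unfolding continuous_on_iff by blast
    show ?thesis
    proof (intro exI[of _ "min d1 d2"] conjI ballI impI)
      show "min d1 d2 > 0" using d1 d2 by simp
      fix y assume y: "y \<in> K" "dist y x < min d1 d2"
      then have ys: "y \<in> Src m i" using d1 by simp
      then have "dist (g m i y) (g m i x) < e" using d2 y by simp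
      then show "dist (f y) (f x) < e" using f_L[OF i ys] f_L[OF i xs] by simp
    qed
  next
    case True
    then obtain c where c: "c \<in> C" "x = a c" by (auto simp: Orb_def)
    have cI: "c \<in> I" "p c \<in> I" using c C_sub p_mem by blast+
    obtain k where k: "k > 0" "inverse (real k) < e" using ex_inverse_of_nat_less e by blast
    have ke: "1 / real (Suc k) < e" using k
      by (smt (verit) divide_less_eq_1 inverse_eq_divide inverse_less_iff_less of_nat_0_less_iff of_nat_less_iff lessI)
    obtain d where d: "d > 0" "\<forall>y\<in>K. dist y (a c) < d \<longrightarrow> y = a c \<or> (\<exists>m\<ge>N + Suc (Suc k). y \<in> prt c (p c) m)"
      using tw_nbhd[OF c(1)] by blast
    have sgc: "tw (sg c) c" "sg c \<in> C" "p (sg c) = c" using tw_sg[OF c(1)] by auto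
    have sgI: "sg c \<in> I" using sgc C_sub by blast
    have Bsg: "B (sg c) c \<noteq> {}" using p_mem[OF sgI] sgc by simp
    show ?thesis
    proof (intro exI[of _ d] conjI ballI impI)
      show "d > 0" by fact
      fix y assume y: "y \<in> K" "dist y x < d"
      show "dist (f y) (f x) < e"
      proof (cases "y = a c")
        case True then show ?thesis using c e by simp
      next
        case False
        then obtain m where m: "m \<ge> N + Suc (Suc k)" "y \<in> prt c (p c) m" using d y c by blast
        have ys: "y \<in> Src m c" using prt_Src[OF cI] m by blast
        have ne: "prt (sg c) c (m - 1) \<noteq> {}" using prt_ne[OF sgI cI(1)] sgc Bsg by simp
        then have tne: "Tgt (m - 1) c \<noteq> {}" using prt_Tgt[OF sgI cI(1)] by blast
        have "f y = g m c y" using f_L[OF cI(1) ys] .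
        moreover have "g m c y \<in> Tgt (m - 1) c" using g_S[OF cI(1) ys _ tne] m by simp
        moreover have "Tgt (m - 1) c \<subseteq> prt (sg c) c (m - 1)" using N3[OF c(1)] m by simp
        moreover have "prt (sg c) (p (sg c)) (m - 1) \<subseteq> ball (a (sg c)) (1 / real (Suc k))"
          using tw_small[OF sgc(2)] m by simp
        ultimately have "f y \<in> ball (a (sg c)) (1 / real (Suc k))" using sgc by auto
        moreover have "f x = a (sg c)" using f_O[OF c(1)] c by simp
        ultimately show ?thesis using ke by (simp add: dist_commute)
      qed
    qed
  qed
qed

lemma f_surj: "f ` K = K"
proof
  show "f ` K \<subseteq> K" using f_K by blast
next
  show "K \<subseteq> f ` K"
  proof
    fix y assume y: "y \<in> K"
    show "y \<in> f ` K"
    proof (cases "y \<in> Orb")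
      case True
      then obtain c where c: "c \<in> C" "y = a c" by (auto simp: Orb_def)
      have pc: "p c \<in> C" using cyc_p[OF pI c(1)] .
      have "f (a (p c)) = a c" using f_O[OF pc] sig_p[OF pI c(1)] by simp
      moreover have "a (p c) \<in> K" using a_mem[OF pc] by blast
      ultimately show ?thesis using c by (metis image_eqI)
    next
      case False
      obtain m where m: "y \<in> L m" using L_cover y False by blast
      obtain i where i: "i \<in> I" "y \<in> Ks i" using Ks_ex y by blast
      have yt: "y \<in> Tgt m i" using m i by (simp add: Tgt_def)
      then have tne: "Tgt (Suc m - 1) i \<noteq> {}" by auto
      have sne: "Src (Suc m) i \<noteq> {}" using N2[OF i(1)] yt by blast
      have "S (Suc m) i ` Src (Suc m) i = Tgt m i" using S[OF i(1) sne tne] by simp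
      then obtain x where x: "x \<in> Src (Suc m) i" "S (Suc m) i x = y" using yt by (metis imageE)
      have "f x = g (Suc m) i x" using f_L[OF i(1) x(1)] .
      also have "\<dots> = S (Suc m) i x" using g1[of "Suc m" i] tne by simp
      finally have "f x = y" using x by simp
      moreover have "x \<in> K" using x Src_clopen[OF i(1)] by (auto simp: clopen_in_def)
      ultimately show ?thesis by blast
    qed
  qed
qed

lemma f_periodic: "x \<in> K \<Longrightarrow> finally_periodic f x"
proof -
  assume x: "x \<in> K"
  define F where "F = Orb \<union> z ` I"
  have finF: "finite F" unfolding F_def Orb_def using C_sub finite_subset by auto
  have zL: "z i \<in> Src 0 (idx (z i))" if "i \<in> I" for i
  proof -
    have "z i \<in> L 0" "z i \<in> K" using z[OF that] L_sub by (auto simp: Tgt_def)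
    then show ?thesis using idx_mem by (simp add: Src_def)
  qed
  have fz: "f (z i) = z (idx (z i))" if "i \<in> I" for i
  proof -
    have zi: "z i \<in> K" using z[OF that] L_sub by (auto simp: Tgt_def)
    have "f (z i) = g 0 (idx (z i)) (z i)" using f_L[OF _ zL[OF that]] idx_mem[OF zi] by blast
    then show ?thesis using g2[of 0] by simp
  qed
  have fF: "f ` F \<subseteq> F"
  proof
    fix w assume "w \<in> f ` F"
    then obtain v where v: "v \<in> F" "w = f v" by blast
    show "w \<in> F"
    proof (cases "v \<in> Orb")
      case True
      then obtain c where c: "c \<in> C" "v = a c" by (auto simp: Orb_def)
      then show ?thesis using v f_O tw_sg by (auto simp: F_def Orb_def)
    next
      case False
      then obtain i where i: "i \<in> I" "v = z i" using v by (auto simp: F_def)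
      have "z i \<in> K" using z[OF i(1)] L_sub by (auto simp: Tgt_def)
      then have "idx (z i) \<in> I" using idx_mem by blast
      then show ?thesis using v i fz[OF i(1)] by (auto simp: F_def)
    qed
  qed
  have reach: "\<forall>y. y \<in> L m \<longrightarrow> (\<exists>n. (f ^^ n) y \<in> F)" for m
  proof (induction m)
    case 0
    show ?case
    proof (intro allI impI)
      fix y assume y: "y \<in> L 0"
      then have yK: "y \<in> K" using L_sub by blast
      have ys: "y \<in> Src 0 (idx y)" using y idx_mem[OF yK] by (simp add: Src_def)
      have "f y = z (idx y)" using f_L[OF _ ys] idx_mem[OF yK] g2[of 0] by simp
      then have "(f ^^ 1) y \<in> F" using idx_mem[OF yK] by (simp add: F_def)
      then show "\<exists>n. (f ^^ n) y \<in> F" by blast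
    qed
  next
    case (Suc m)
    show ?case
    proof (intro allI impI)
      fix y assume y: "y \<in> L (Suc m)"
      then have yK: "y \<in> K" using L_sub by blast
      define i where "i = idx y"
      have i: "i \<in> I" using idx_mem[OF yK] by (simp add: i_def)
      have ys: "y \<in> Src (Suc m) i" using y idx_mem[OF yK] by (simp add: Src_def i_def)
      show "\<exists>n. (f ^^ n) y \<in> F"
      proof (cases "Tgt m i \<noteq> {}")
        case True
        have "f y = g (Suc m) i y" using f_L[OF i ys] .
        moreover have "g (Suc m) i y \<in> Tgt m i" using g_S[OF i ys] True by simp
        ultimately have "f y \<in> L m" by (simp add: Tgt_def)
        then obtain n where "(f ^^ n) (f y) \<in> F" using Suc by blast
        then have "(f ^^ Suc n) y \<in> F" by (simp add: funpow_swap1)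
        then show ?thesis by blast
      next
        case False
        have "f y = z i" using f_L[OF i ys] g2[of "Suc m" i] False by simp
        then have "(f ^^ 1) y \<in> F" using i by (simp add: F_def)
        then show ?thesis by blast
      qed
    qed
  qed
  have "\<exists>n. (f ^^ n) x \<in> F"
  proof (cases "x \<in> Orb")
    case True
    then have "(f ^^ 0) x \<in> F" by (simp add: F_def)
    then show ?thesis by blast
  next
    case False
    then obtain m where "x \<in> L m" using L_cover x by blast
    then show ?thesis using reach by blast
  qed
  then obtain n where "(f ^^ n) x \<in> F" by blast
  then show ?thesis using fin_periodic[OF finF fF] by blast
qed

lemma main: "\<exists>T'. endomorphism K T' \<and> (\<forall>x\<in>K. \<forall>i\<in>I. T' x \<in> Ks i \<longleftrightarrow> T x \<in> Ks i) \<and> (\<forall>x\<in>K. finally_periodic T' x)"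
proof -
  have "endomorphism K f" using f_cont f_surj by (simp add: endomorphism_def)
  moreover have "\<forall>x\<in>K. \<forall>i\<in>I. f x \<in> Ks i \<longleftrightarrow> T x \<in> Ks i"
  proof (intro ballI)
    fix x i assume x: "x \<in> K" and i: "i \<in> I"
    have j: "idx x \<in> I" "x \<in> A (idx x)" using idx_mem[OF x] by auto
    have "f x \<in> Ks (idx x)" using f_Ks[OF x] .
    moreover have "T x \<in> Ks (idx x)" using j by (simp add: A_def)
    ultimately show "f x \<in> Ks i \<longleftrightarrow> T x \<in> Ks i" using Ks_uniq[OF i j(1)] by blast
  qed
  moreover have "\<forall>x\<in>K. finally_periodic f x" using f_periodic by blast
  ultimately show ?thesis by blast
qed

end

theorem theorem3p1:
  fixes K :: "'a::metric_space set" and T :: "'a \<Rightarrow> 'a"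
    and Ks :: "nat \<Rightarrow> 'a set" and N :: nat
  assumes "cantor_set K"
    and "endomorphism K T"
    and "\<And>i. i \<in> {1..N} \<Longrightarrow> cantor_set (Ks i)"
    and "\<And>i j. i \<in> {1..N} \<Longrightarrow> j \<in> {1..N} \<Longrightarrow> i \<noteq> j \<Longrightarrow> Ks i \<inter> Ks j = {}"
    and "K = (\<Union>i\<in>{1..N}. Ks i)"
  shows "\<exists>T'. endomorphism K T'
           \<and> (\<forall>x\<in>K. \<forall>i\<in>{1..N}. T' x \<in> Ks i \<longleftrightarrow> T x \<in> Ks i)
           \<and> (\<forall>x\<in>K. finally_periodic T' x)"
proof -
  interpret cset K T Ks N using assms by unfold_locales
  show ?thesis using main by simp
qed

end
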